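(* Suppose Assumption 1 holds with $\alpha\in(0,1]$, and let $(f_t)_{t\in\mathbb N}$ be the online gradient descent iterates. If the step sizes satisfy $$\sum_{t=1}^\infty\eta_t=\infty\qquad\text{and}\qquad\lim_{t\to\infty}\eta_t^{\alpha}\sum_{k=1}^{t}\eta_k^2=0,$$ then $\lim_{t\to\infty}\mathbb E[\mathcal E(f_t)]-\mathcal E(f_H)=0$.
   Context: Setting: Let $\mathcal X\subset\mathbb R^d$, $\mathcal Y\subset\mathbb R$, $\mathcal Z=\mathcal X\times\mathcal Y$, and let $\rho$ be a Borel probability measure on $\mathcal Z$. Let $K:\mathcal X\times\mathcal X\to\mathbb R$ be a continuous, symmetric, positive semi-definite kernel with reproducing kernel Hilbert space $H_K$ (inner product $\langle\cdot,\cdot\rangle$, norm $\|\cdot\|$), $K_x:=K(x,\cdot)$, reproducing property $f(x)=\langle f,K_x\rangle$, and $\kappa:=\sup_{x\in\mathcal X}\sqrt{K(x,x)}<\infty$. Let $\phi:\mathcal Y\times\mathbb R\to[0,\infty)$ be a loss function, differentiable in its second argument, and write $\phi'(y,s)$ for its derivative with respect to $s$. The generalization error of $f:\mathcal X\to\mathbb R$ is $\mathcal E(f)=\int_{\mathcal Z}\phi(y,f(x))\,d\rho(x,y)$. It is assumed that a minimizer $f_H\in\arg\min_{f\in H_K}\mathcal E(f)$ exists and that $\max\{\sup_{y\in\mathcal Y}\phi(y,0),\ \sup_{(x,y)\in\mathcal Z}\phi(y,f_H(x))\}<\infty$. Let $z_t=(x_t,y_t)$, $t\in\mathbb N$, be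 i.i.d. samples from $\rho$, let $(\eta_t)_{t\in\mathbb N}$ be positive step sizes, and define the online gradient descent iterates by $f_1=0$ and $f_{t+1}=f_t-\eta_t\phi'(y_t,f_t(x_t))K_{x_t}$ for $t\in\mathbb N$ (so $f_t$ depends only on $z_1,\dots,z_{t-1}$). Assumption 1: for every $y\in\mathcal Y$, $\phi(y,\cdot)$ is convex and differentiable, and there are constants $\alpha\in(0,1]$, $L>0$ with $|\phi'(y,s)-\phi'(y,\tilde s)|\le L|s-\tilde s|^{\alpha}$ for all $s,\tilde s\in\mathbb R$, $y\in\mathcal Y$. *)

theory Defs
  imports "HOL-Probability.Probability"
begin

text \<open>The RKHS H_K is represented by a real Hilbert space 'h together with the
  feature map Phi (Phi x = K_x), where an element g of 'h is identified with the
  function x |-> inner g (Phi x) (reproducing property).\<close>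

definition eval_h :: "('x \<Rightarrow> 'h::real_inner) \<Rightarrow> 'h \<Rightarrow> 'x \<Rightarrow> real" where
  "eval_h Phi g x = inner g (Phi x)"

definition gen_err :: "('x \<times> real) measure \<Rightarrow> (real \<Rightarrow> real \<Rightarrow> real) \<Rightarrow> ('x \<Rightarrow> real) \<Rightarrow> ennreal" where
  "gen_err rho phi f = (\<integral>\<^sup>+ z. ennreal (phi (snd z) (f (fst z))) \<partial>rho)"

text \<open>Online gradient descent iterates, indexed from 1: ogd ... 1 = 0 and
  ogd ... (t+1) = ogd ... t - eta t * phi'(y_t, f_t(x_t)) K_{x_t} for t >= 1,
  where the sample sequence is omega, z_t = omega t. (ogd ... 0 = 0 is unused.)\<close>
fun ogd :: "(nat \<Rightarrow> real) \<Rightarrow> (real \<Rightarrow> real \<Rightarrow> real) \<Rightarrow> ('x \<Rightarrow> 'h::real_inner)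
             \<Rightarrow> (nat \<Rightarrow> 'x \<times> real) \<Rightarrow> nat \<Rightarrow> 'h" where
  "ogd eta dphi Phi \<omega> 0 = 0"
| "ogd eta dphi Phi \<omega> (Suc t) =
     (if t = 0 then 0
      else ogd eta dphi Phi \<omega> t
           - (eta t * dphi (snd (\<omega> t)) (inner (ogd eta dphi Phi \<omega> t) (Phi (fst (\<omega> t)))))
             *\<^sub>R Phi (fst (\<omega> t)))"

end

theory Submission
  imports Defs
begin

locale ogdl =
  fixes X :: "'x::euclidean_space set" and Y :: "real set"
    and rho :: "('x \<times> real) measure"
    and K :: "'x \<Rightarrow> 'x \<Rightarrow> real" and Phi :: "'x \<Rightarrow> 'h::real_inner"
    and phi dphi :: "real \<Rightarrow> real \<Rightarrow> real"
    and eta :: "nat \<Rightarrow> real" and \<alpha> L :: real and fH :: 'h and B \<kappa> :: real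
  assumes rho_prob: "prob_space rho"
    and rho_sets: "sets rho = sets (restrict_space borel (X \<times> Y))"
    and K_cont: "continuous_on (X \<times> X) (\<lambda>(x, x'). K x x')"
    and K_feature: "\<And>x x'. x \<in> X \<Longrightarrow> x' \<in> X \<Longrightarrow> K x x' = inner (Phi x) (Phi x')"
    and kappa: "\<And>x. x\<in>X \<Longrightarrow> sqrt (K x x) \<le> \<kappa>"
    and phi_nonneg: "\<And>y s. y \<in> Y \<Longrightarrow> 0 \<le> phi y s"
    and phi_meas: "(\<lambda>(y, s). phi y s) \<in> borel_measurable borel"
    and phi_deriv: "\<And>y s. y \<in> Y \<Longrightarrow> (phi y has_real_derivative dphi y s) (at s)"
    and phi_convex: "\<And>y. y \<in> Y \<Longrightarrow> convex_on UNIV (phi y)"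
    and alpha: "0 < \<alpha>" "\<alpha> \<le> 1" and L_pos: "0 < L"
    and holder: "\<And>y s s'. y \<in> Y \<Longrightarrow> \<bar>dphi y s - dphi y s'\<bar> \<le> L * \<bar>s - s'\<bar> powr \<alpha>"
    and fH_min: "\<And>g. gen_err rho phi (eval_h Phi fH) \<le> gen_err rho phi (eval_h Phi g)"
    and B0: "\<And>y. y\<in>Y \<Longrightarrow> phi y 0 \<le> B"
    and BH: "\<And>x y. x\<in>X \<Longrightarrow> y\<in>Y \<Longrightarrow> phi y (eval_h Phi fH x) \<le> B"
    and eta_pos: "\<And>t. 1 \<le> t \<Longrightarrow> 0 < eta t"
    and eta_div: "filterlim (\<lambda>n. \<Sum>t=1..n. eta t) at_top sequentially"
    and eta_lim: "(\<lambda>t. eta t powr \<alpha> * (\<Sum>k=1..t. (eta k)\<^sup>2)) \<longlonglongrightarrow> 0"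
begin

lemma space_rho: "space rho = X \<times> Y"
  using sets_eq_imp_space_eq[OF rho_sets] by (simp add: space_restrict_space)

lemma XY_ne: "X \<noteq> {}" "Y \<noteq> {}"
  using prob_space.not_empty[OF rho_prob] space_rho by auto

lemma K_eq: "x \<in> X \<Longrightarrow> K x x = (norm (Phi x))\<^sup>2"
  by (simp add: K_feature power2_norm_eq_inner)

lemma kappa_nonneg: "0 \<le> \<kappa>"
proof -
  obtain x where "x \<in> X" using XY_ne by auto
  then have "sqrt (K x x) = norm (Phi x)" using K_eq by simp
  then show ?thesis using kappa[of x] \<open>x \<in> X\<close> norm_ge_zero[of "Phi x"] by linarith
qed

lemma norm_Phi: "x \<in> X \<Longrightarrow> norm (Phi x) \<le> \<kappa>"
  using kappa[of x] K_eq[of x] by simp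

lemma K_bound: "x \<in> X \<Longrightarrow> x' \<in> X \<Longrightarrow> \<bar>K x x'\<bar> \<le> \<kappa>\<^sup>2"
proof -
  assume a: "x \<in> X" "x' \<in> X"
  have "\<bar>K x x'\<bar> \<le> norm (Phi x) * norm (Phi x')"
    using K_feature[OF a] Cauchy_Schwarz_ineq2 by simp
  also have "\<dots> \<le> \<kappa> * \<kappa>" using norm_Phi a kappa_nonneg by (intro mult_mono) auto
  finally show ?thesis by (simp add: power2_eq_square)
qed

lemma K_sym: "x \<in> X \<Longrightarrow> x' \<in> X \<Longrightarrow> K x x' = K x' x"
  by (simp add: K_feature inner_commute)

lemma meas_cont_rho:
  assumes "continuous_on (X \<times> Y) g"
  shows "g \<in> borel_measurable rho"
  using borel_measurable_continuous_on_restrict[OF assms] measurable_cong_sets[OF rho_sets refl] by blast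

lemma id_rho: "(\<lambda>z. z) \<in> measurable rho borel"
  using measurable_restrict_space1[OF measurable_id, of borel "X \<times> Y"] measurable_cong_sets[OF rho_sets refl]
  by blast

lemma meas_cont_rho2:
  assumes "continuous_on ((X \<times> Y) \<times> (X \<times> Y)) g"
  shows "g \<in> borel_measurable (rho \<Otimes>\<^sub>M rho)"
proof -
  have "(\<lambda>w. w) \<in> measurable (rho \<Otimes>\<^sub>M rho) (restrict_space borel ((X \<times> Y) \<times> (X \<times> Y)))"
  proof (rule measurable_restrict_space2)
    show "(\<lambda>w. w) \<in> space (rho \<Otimes>\<^sub>M rho) \<rightarrow> (X \<times> Y) \<times> X \<times> Y"
      by (auto simp: space_pair_measure space_rho)
    have "(\<lambda>w. w) \<in> measurable (rho \<Otimes>\<^sub>M rho) (borel \<Otimes>\<^sub>M borel)"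
      using id_rho by (intro measurable_pair_iff[THEN iffD2]) auto
    then show "(\<lambda>w. w) \<in> measurable (rho \<Otimes>\<^sub>M rho) borel"
      by (simp add: borel_prod)
  qed
  from measurable_comp[OF this borel_measurable_continuous_on_restrict[OF assms]] show ?thesis
    by (simp add: comp_def)
qed

lemma mvt_phi:
  assumes y: "y \<in> Y"
  shows "\<exists>\<xi>. \<bar>\<xi> - u\<bar> \<le> \<bar>v - u\<bar> \<and> phi y v - phi y u = (v - u) * dphi y \<xi>"
proof (cases "u < v")
  case True
  from MVT2[OF True, of "phi y" "dphi y"] phi_deriv[OF y] obtain z where
    "u < z" "z < v" "phi y v - phi y u = (v - u) * dphi y z" by blast
  then show ?thesis by (intro exI[of _ z]) auto
next
  case False
  show ?thesis
  proof (cases "v < u")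
    case True
    from MVT2[OF True, of "phi y" "dphi y"] phi_deriv[OF y] obtain z where
      "v < z" "z < u" "phi y u - phi y v = (u - v) * dphi y z" by blast
    then show ?thesis by (intro exI[of _ z]) (auto simp: algebra_simps)
  next
    case False
    with \<open>\<not> u < v\<close> have "u = v" by auto
    then show ?thesis by (intro exI[of _ u]) auto
  qed
qed

lemma descent:
  assumes y: "y \<in> Y"
  shows "phi y v \<le> phi y u + dphi y u * (v - u) + L * \<bar>v - u\<bar> powr (1 + \<alpha>)"
proof -
  obtain \<xi> where xi: "\<bar>\<xi> - u\<bar> \<le> \<bar>v - u\<bar>" "phi y v - phi y u = (v - u) * dphi y \<xi>"
    using mvt_phi[OF y] by blast
  have "(v - u) * dphi y \<xi> = dphi y u * (v - u) + (v - u) * (dphi y \<xi> - dphi y u)"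
    by (simp add: algebra_simps)
  also have "(v - u) * (dphi y \<xi> - dphi y u) \<le> \<bar>v - u\<bar> * \<bar>dphi y \<xi> - dphi y u\<bar>"
    by (metis abs_ge_self abs_mult)
  also have "\<bar>dphi y \<xi> - dphi y u\<bar> \<le> L * \<bar>\<xi> - u\<bar> powr \<alpha>" using holder[OF y] .
  also have "\<dots> \<le> L * \<bar>v - u\<bar> powr \<alpha>"
    using xi(1) alpha L_pos by (intro mult_left_mono powr_mono2) auto
  finally have "phi y v - phi y u \<le> dphi y u * (v - u) + \<bar>v - u\<bar> * (L * \<bar>v - u\<bar> powr \<alpha>)"
    using xi(2) by (simp add: mult_left_mono)
  also have "\<bar>v - u\<bar> * (L * \<bar>v - u\<bar> powr \<alpha>) = L * \<bar>v - u\<bar> powr (1 + \<alpha>)"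
    by (cases "v = u") (auto simp: powr_add)
  finally show ?thesis by simp
qed

lemma tangent:
  assumes y: "y \<in> Y"
  shows "phi y u + dphi y u * (v - u) \<le> phi y v"
proof -
  have "dphi y u * (v - u) \<le> phi y v - phi y u"
    by (rule convex_on_imp_above_tangent[OF phi_convex[OF y]]) (use phi_deriv[OF y] in auto)
  then show ?thesis by simp
qed

lemma selfb:
  assumes y: "y \<in> Y"
  shows "\<bar>dphi y s\<bar> * (\<bar>dphi y s\<bar> / (2 * L)) powr (1 / \<alpha>) \<le> 2 * phi y s"
proof -
  define d where "d = \<bar>dphi y s\<bar>"
  define h where "h = (d / (2 * L)) powr (1 / \<alpha>)"
  define \<sigma> where "\<sigma> = sgn (dphi y s)"
  have h0: "0 \<le> h" unfolding h_def by simp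
  have hp: "h powr \<alpha> = d / (2 * L)"
    unfolding h_def using alpha L_pos by (simp add: d_def powr_powr)
  have dsig: "d = \<sigma> * dphi y s" unfolding d_def \<sigma>_def by (simp add: abs_sgn)
  obtain \<xi> where xi: "\<bar>\<xi> - s\<bar> \<le> \<bar>(s - \<sigma> * h) - s\<bar>"
      "phi y (s - \<sigma> * h) - phi y s = ((s - \<sigma> * h) - s) * dphi y \<xi>"
    using mvt_phi[OF y] by blast
  have sig: "\<bar>\<sigma>\<bar> \<le> 1" unfolding \<sigma>_def by (simp add: abs_sgn_eq)
  have xi2: "\<bar>\<xi> - s\<bar> \<le> h" using xi(1) sig h0
  proof -
    have "\<bar>(s - \<sigma> * h) - s\<bar> = \<bar>\<sigma>\<bar> * h" using h0 by (simp add: abs_mult)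
    moreover have "\<bar>\<sigma>\<bar> * h \<le> 1 * h" by (rule mult_right_mono[OF sig h0])
    ultimately show ?thesis using xi(1) by linarith
  qed
  have e1: "((s - \<sigma> * h) - s) * dphi y \<xi> = - h * (\<sigma> * dphi y s) - \<sigma> * h * (dphi y \<xi> - dphi y s)"
    by (simp add: algebra_simps)
  have e2: "- \<sigma> * h * (dphi y \<xi> - dphi y s) \<le> h * \<bar>dphi y \<xi> - dphi y s\<bar>"
  proof -
    have "- \<sigma> * h * (dphi y \<xi> - dphi y s) \<le> \<bar>\<sigma> * h * (dphi y \<xi> - dphi y s)\<bar>" by linarith
    also have "\<dots> = \<bar>\<sigma>\<bar> * (h * \<bar>dphi y \<xi> - dphi y s\<bar>)" using h0 by (simp add: abs_mult)
    also have "\<dots> \<le> 1 * (h * \<bar>dphi y \<xi> - dphi y s\<bar>)"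
      by (rule mult_right_mono[OF sig]) (use h0 in simp)
    finally show ?thesis by simp
  qed
  have e3: "\<bar>dphi y \<xi> - dphi y s\<bar> \<le> L * h powr \<alpha>"
  proof -
    have "\<bar>\<xi> - s\<bar> powr \<alpha> \<le> h powr \<alpha>" using xi2 alpha by (intro powr_mono2) auto
    then have "L * \<bar>\<xi> - s\<bar> powr \<alpha> \<le> L * h powr \<alpha>" using L_pos by (intro mult_left_mono) auto
    then show ?thesis using holder[OF y, of \<xi> s] by linarith
  qed
  have "phi y (s - \<sigma> * h) - phi y s \<le> - h * d + h * (L * h powr \<alpha>)"
  proof -
    have "- h * d = - h * (\<sigma> * dphi y s)" by (simp add: dsig)
    then show ?thesis using xi(2) e1 e2 mult_left_mono[OF e3 h0] by linarith
  qed
  also have "h * (L * h powr \<alpha>) = h * d / 2" using hp L_pos by simp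
  finally have "h * d \<le> 2 * phi y s" using phi_nonneg[OF y, of "s - \<sigma> * h"] by linarith
  then show ?thesis unfolding h_def d_def by (simp add: mult.commute)
qed

definition "C0 = 2 * (2 * L) powr (1 / \<alpha>)"

lemma C0_pos: "0 < C0" unfolding C0_def using L_pos by simp

lemma selfb_pow:
  assumes y: "y \<in> Y" and d1: "1 < \<bar>dphi y s\<bar>" and p: "0 \<le> p" "p \<le> 1 + 1 / \<alpha>"
  shows "\<bar>dphi y s\<bar> powr p \<le> C0 * phi y s"
proof -
  define d where "d = \<bar>dphi y s\<bar>"
  have d1': "1 < d" using d1 d_def by simp
  have "d powr p \<le> d powr (1 + 1 / \<alpha>)" using d1' p by (intro powr_mono) auto
  also have "\<dots> = d * (d / (2 * L)) powr (1 / \<alpha>) * (2 * L) powr (1 / \<alpha>)"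
    using d1' L_pos by (simp add: powr_add powr_divide)
  also have "\<dots> \<le> 2 * phi y s * (2 * L) powr (1 / \<alpha>)"
    using selfb[OF y, of s] unfolding d_def by (intro mult_right_mono) auto
  finally show ?thesis unfolding C0_def d_def by (simp add: mult_ac)
qed

lemma selfb2:
  assumes y: "y \<in> Y"
  shows "(dphi y s)\<^sup>2 \<le> 1 + C0 * phi y s"
proof (cases "\<bar>dphi y s\<bar> \<le> 1")
  case True
  then have "(dphi y s)\<^sup>2 \<le> 1" by (metis abs_le_square_iff abs_one one_power2)
  moreover have "0 \<le> C0 * phi y s" using C0_pos phi_nonneg[OF y, of s] by simp
  ultimately show ?thesis by linarith
next
  case False
  have "(dphi y s)\<^sup>2 = \<bar>dphi y s\<bar> powr 2" using False by (simp add: powr_numeral)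
  also have "\<dots> \<le> C0 * phi y s" using False alpha
    by (intro selfb_pow[OF y]) (auto simp: field_simps)
  finally show ?thesis by simp
qed

lemma selfb3:
  assumes y: "y \<in> Y"
  shows "\<bar>dphi y s\<bar> powr (1 + \<alpha>) \<le> 1 + C0 * phi y s"
proof (cases "\<bar>dphi y s\<bar> \<le> 1")
  case True
  then have "\<bar>dphi y s\<bar> powr (1 + \<alpha>) \<le> 1" using alpha by (intro powr_le1) auto
  moreover have "0 \<le> C0 * phi y s" using C0_pos phi_nonneg[OF y, of s] by simp
  ultimately show ?thesis by linarith
next
  case False
  have "\<alpha> * \<alpha> \<le> 1" using alpha by (simp add: mult_le_one)
  then have "\<bar>dphi y s\<bar> powr (1 + \<alpha>) \<le> C0 * phi y s" using False alpha
    by (intro selfb_pow[OF y]) (auto simp: field_simps)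
  then show ?thesis by simp
qed

definition "G1 = 1 + C0 * B + L"

lemma dphi0_bound:
  assumes y: "y \<in> Y"
  shows "\<bar>dphi y 0\<bar> \<le> 1 + C0 * B"
proof -
  have sq: "(dphi y 0)\<^sup>2 \<le> 1 + C0 * B"
  proof -
    have "C0 * phi y 0 \<le> C0 * B" using B0[OF y] C0_pos by (intro mult_left_mono) auto
    then show ?thesis using selfb2[OF y, of 0] by linarith
  qed
  show ?thesis
  proof (cases "\<bar>dphi y 0\<bar> \<le> 1")
    case True
    have "0 \<le> C0 * B" using C0_pos B0[OF y] phi_nonneg[OF y, of 0] by simp
    then show ?thesis using True by linarith
  next
    case False
    then have "\<bar>dphi y 0\<bar> \<le> (dphi y 0)\<^sup>2"
    proof -
      have "\<bar>dphi y 0\<bar> * 1 \<le> \<bar>dphi y 0\<bar> * \<bar>dphi y 0\<bar>" using False by (intro mult_left_mono) auto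
      then show ?thesis by (simp add: power2_eq_square)
    qed
    with sq show ?thesis by simp
  qed
qed

lemma powr_le_1_plus: "0 \<le> (x::real) \<Longrightarrow> 0 \<le> p \<Longrightarrow> p \<le> 1 \<Longrightarrow> x powr p \<le> 1 + x"
proof (cases "x \<le> 1")
  case True
  assume "0 \<le> x" "0 \<le> p" "p \<le> 1"
  then have "x powr p \<le> 1" using True by (intro powr_le1) auto
  then show ?thesis using \<open>0 \<le> x\<close> by simp
next
  case False
  assume "0 \<le> x" "0 \<le> p" "p \<le> 1"
  then have "x powr p \<le> x powr 1" using False by (intro powr_mono) auto
  then show ?thesis using False by simp
qed

lemma powr_le_1_sq: "0 \<le> (x::real) \<Longrightarrow> 1 \<le> p \<Longrightarrow> p \<le> 2 \<Longrightarrow> x powr p \<le> 1 + x\<^sup>2"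
proof (cases "x \<le> 1")
  case True
  assume "0 \<le> x" "1 \<le> p" "p \<le> 2"
  then have "x powr p \<le> 1" using True by (intro powr_le1) auto
  then show ?thesis using zero_le_power2[of x] by linarith
next
  case False
  assume "0 \<le> x" "1 \<le> p" "p \<le> 2"
  then have "x powr p \<le> x powr 2" using False by (intro powr_mono) auto
  then show ?thesis using False by (simp add: powr_numeral)
qed

lemma dphi_bound:
  assumes y: "y \<in> Y"
  shows "\<bar>dphi y s\<bar> \<le> G1 + L * \<bar>s\<bar>"
proof -
  have "\<bar>dphi y s\<bar> \<le> \<bar>dphi y 0\<bar> + \<bar>dphi y s - dphi y 0\<bar>" by linarith
  also have "\<bar>dphi y s - dphi y 0\<bar> \<le> L * \<bar>s\<bar> powr \<alpha>" using holder[OF y, of s 0] by simp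
  also have "\<dots> \<le> L * (1 + \<bar>s\<bar>)" using alpha L_pos
    by (intro mult_left_mono powr_le_1_plus) auto
  finally show ?thesis using dphi0_bound[OF y] unfolding G1_def by (simp add: algebra_simps)
qed

lemma phi_bound:
  assumes y: "y \<in> Y"
  shows "phi y s \<le> B + L + G1 * \<bar>s\<bar> + L * s\<^sup>2"
proof -
  have "phi y s \<le> phi y 0 + dphi y 0 * (s - 0) + L * \<bar>s - 0\<bar> powr (1 + \<alpha>)"
    by (rule descent[OF y])
  also have "dphi y 0 * (s - 0) \<le> G1 * \<bar>s\<bar>"
  proof -
    have "dphi y 0 * s \<le> \<bar>dphi y 0\<bar> * \<bar>s\<bar>" by (metis abs_ge_self abs_mult)
    also have "\<dots> \<le> G1 * \<bar>s\<bar>" using dphi0_bound[OF y] L_pos unfolding G1_def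
      by (intro mult_right_mono) auto
    finally show ?thesis by simp
  qed
  also have "L * \<bar>s - 0\<bar> powr (1 + \<alpha>) \<le> L * (1 + \<bar>s\<bar>\<^sup>2)"
    using alpha L_pos powr_le_1_sq[of "\<bar>s\<bar>" "1 + \<alpha>"] by (intro mult_left_mono) auto
  finally show ?thesis using B0[OF y] by (simp add: algebra_simps)
qed

lemma G1_pos: "0 < G1"
proof -
  obtain y where "y \<in> Y" using XY_ne by auto
  then have "0 \<le> C0 * B" using B0 phi_nonneg[of y 0] C0_pos by (simp add: order_trans[OF _ B0])
  then show ?thesis using L_pos unfolding G1_def by linarith
qed

end


lemma borel_Pair_real:
  fixes f :: "'a \<Rightarrow> 'b::second_countable_topology" and g :: "'a \<Rightarrow> 'c::second_countable_topology"
  shows "f \<in> borel_measurable M \<Longrightarrow> g \<in> borel_measurable M \<Longrightarrow> (\<lambda>x. (f x, g x)) \<in> borel_measurable M"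
  unfolding borel_prod[symmetric] by (rule measurable_Pair)

context ogdl
begin

abbreviation PM :: "nat set \<Rightarrow> (nat \<Rightarrow> 'x \<times> real) measure" where
  "PM I \<equiv> PiM I (\<lambda>_. rho)"

definition F :: "(nat \<Rightarrow> 'x \<times> real) \<Rightarrow> nat \<Rightarrow> 'h" where
  "F \<omega> t = ogd eta dphi Phi \<omega> t"
definition fv :: "(nat \<Rightarrow> 'x \<times> real) \<Rightarrow> nat \<Rightarrow> 'x \<Rightarrow> real" where
  "fv \<omega> t x = inner (F \<omega> t) (Phi x)"
definition gr :: "(nat \<Rightarrow> 'x \<times> real) \<Rightarrow> nat \<Rightarrow> real" where
  "gr \<omega> t = dphi (snd (\<omega> t)) (fv \<omega> t (fst (\<omega> t)))"
definition fh :: "'x \<Rightarrow> real" where "fh x = inner fH (Phi x)"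

lemma F_0[simp]: "F \<omega> 0 = 0" "F \<omega> (Suc 0) = 0" by (simp_all add: F_def)

lemma F_Suc: "1 \<le> t \<Longrightarrow> F \<omega> (Suc t) = F \<omega> t - (eta t * gr \<omega> t) *\<^sub>R Phi (fst (\<omega> t))"
  by (simp add: F_def gr_def fv_def)

lemma F_local: "(\<And>k. k < t \<Longrightarrow> \<omega> k = \<omega>' k) \<Longrightarrow> F \<omega> t = F \<omega>' t"
proof (induction t)
  case 0 then show ?case by simp
next
  case (Suc t)
  show ?case
  proof (cases "t = 0")
    case True then show ?thesis by simp
  next
    case False
    have "F \<omega> t = F \<omega>' t" using Suc by auto
    moreover have "\<omega> t = \<omega>' t" using Suc by auto
    ultimately show ?thesis using False by (simp add: F_Suc gr_def fv_def)
  qed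
qed

lemma F_upd: "t \<le> j \<Longrightarrow> F (fun_upd \<omega> j x) t = F \<omega> t"
  by (rule F_local) auto

lemma fv_upd: "t \<le> j \<Longrightarrow> fv (fun_upd \<omega> j x) t = fv \<omega> t"
  using F_upd by (simp add: fv_def fun_eq_iff)

lemma fv_Suc:
  assumes "1 \<le> t" "fst (\<omega> t) \<in> X" "x \<in> X"
  shows "fv \<omega> (Suc t) x = fv \<omega> t x - eta t * gr \<omega> t * K (fst (\<omega> t)) x"
  using assms by (simp add: fv_def F_Suc inner_diff_left K_feature)

fun Mb :: "nat \<Rightarrow> real" where
  "Mb 0 = 0"
| "Mb (Suc t) = Mb t + \<bar>eta t\<bar> * (G1 + L * \<kappa> * Mb t) * \<kappa>"

lemma Mb_nonneg: "0 \<le> Mb t"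
proof (induction t)
  case (Suc t)
  have "0 \<le> \<bar>eta t\<bar> * (G1 + L * \<kappa> * Mb t) * \<kappa>"
    using Suc G1_pos L_pos kappa_nonneg by (intro mult_nonneg_nonneg add_nonneg_nonneg) auto
  then show ?case using Suc by simp
qed simp

lemma fv_bound_F: "x \<in> X \<Longrightarrow> \<bar>inner f (Phi x)\<bar> \<le> norm f * \<kappa>"
  using Cauchy_Schwarz_ineq2[of f "Phi x"] mult_left_mono[OF norm_Phi[of x] norm_ge_zero[of f]] by linarith

lemma F_bound: "(\<And>k. k < t \<Longrightarrow> \<omega> k \<in> X \<times> Y) \<Longrightarrow> norm (F \<omega> t) \<le> Mb t"
proof (induction t)
  case 0 then show ?case by simp
next
  case (Suc t)
  show ?case
  proof (cases "t = 0")
    case True then show ?thesis using Mb_nonneg[of "Suc 0"] by (simp del: Mb.simps)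
  next
    case False
    have IH: "norm (F \<omega> t) \<le> Mb t" using Suc by auto
    have wt: "fst (\<omega> t) \<in> X" "snd (\<omega> t) \<in> Y" using Suc.prems[of t] by (auto simp: mem_Times_iff)
    have evb: "\<bar>fv \<omega> t (fst (\<omega> t))\<bar> \<le> Mb t * \<kappa>"
      using fv_bound_F[OF wt(1), of "F \<omega> t"] mult_right_mono[OF IH kappa_nonneg] unfolding fv_def
      by linarith
    have grb: "\<bar>gr \<omega> t\<bar> \<le> G1 + L * \<kappa> * Mb t"
    proof -
      have "\<bar>gr \<omega> t\<bar> \<le> G1 + L * \<bar>fv \<omega> t (fst (\<omega> t))\<bar>" unfolding gr_def by (rule dphi_bound[OF wt(2)])
      also have "\<dots> \<le> G1 + L * (Mb t * \<kappa>)" using evb L_pos by (intro add_left_mono mult_left_mono) auto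
      finally show ?thesis by (simp add: mult_ac)
    qed
    have "norm (F \<omega> (Suc t)) \<le> norm (F \<omega> t) + norm ((eta t * gr \<omega> t) *\<^sub>R Phi (fst (\<omega> t)))"
      using False norm_triangle_ineq4[of "F \<omega> t" "(eta t * gr \<omega> t) *\<^sub>R Phi (fst (\<omega> t))"] by (simp add: F_Suc)
    also have "norm ((eta t * gr \<omega> t) *\<^sub>R Phi (fst (\<omega> t))) = \<bar>eta t\<bar> * \<bar>gr \<omega> t\<bar> * norm (Phi (fst (\<omega> t)))"
      by (simp add: abs_mult)
    also have "\<dots> \<le> \<bar>eta t\<bar> * (G1 + L * \<kappa> * Mb t) * \<kappa>"
      using grb norm_Phi[OF wt(1)] by (intro mult_mono mult_left_mono) auto
    finally show ?thesis using IH by simp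
  qed
qed

lemma Phi_cont: "continuous_on X Phi"
proof -
  have KK: "continuous_on X (\<lambda>x'. K x' x')"
  proof -
    have "continuous_on X ((\<lambda>(x, x'). K x x') \<circ> (\<lambda>x. (x, x)))"
      by (rule continuous_on_compose[OF _ continuous_on_subset[OF K_cont]]) (auto intro!: continuous_intros)
    then show ?thesis by (simp add: comp_def)
  qed
  have K1: "continuous_on X (\<lambda>x'. K x' x)" if "x \<in> X" for x
  proof -
    have "continuous_on X ((\<lambda>(x, x'). K x x') \<circ> (\<lambda>x'. (x', x)))"
      by (rule continuous_on_compose[OF _ continuous_on_subset[OF K_cont]]) (use that in \<open>auto intro!: continuous_intros\<close>)
    then show ?thesis by (simp add: comp_def)
  qed
  show ?thesis unfolding continuous_on_def
  proof
    fix x assume x: "x \<in> X"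
    define g where "g x' = sqrt (K x' x' - 2 * K x' x + K x x)" for x'
    have gc: "continuous_on X g" unfolding g_def
      by (intro continuous_intros KK K1 x)
    have "(g \<longlongrightarrow> g x) (at x within X)" using gc x by (simp add: continuous_on_def)
    moreover have "g x = 0" by (simp add: g_def)
    ultimately have g0: "(g \<longlongrightarrow> 0) (at x within X)" by simp
    have eq: "dist (Phi x') (Phi x) = g x'" if "x' \<in> X" for x'
    proof -
      have "(dist (Phi x') (Phi x))\<^sup>2 = inner (Phi x' - Phi x) (Phi x' - Phi x)"
        by (simp add: dist_norm power2_norm_eq_inner)
      also have "\<dots> = K x' x' - 2 * K x' x + K x x"
        using that x by (simp add: inner_diff_left inner_diff_right inner_commute[of "Phi x" "Phi x'"]
            K_feature[OF that that] K_feature[OF that x] K_feature[OF x x])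
      finally have "g x' = sqrt ((dist (Phi x') (Phi x))\<^sup>2)" by (simp add: g_def)
      then show ?thesis by simp
    qed
    have evq: "eventually (\<lambda>x'. g x' = dist (Phi x') (Phi x)) (at x within X)"
      unfolding eventually_at_filter by (rule always_eventually) (auto simp: eq)
    have "((\<lambda>x'. dist (Phi x') (Phi x)) \<longlongrightarrow> 0) (at x within X)"
      by (rule Lim_transform_eventually[OF g0 evq])
    then show "(Phi \<longlongrightarrow> Phi x) (at x within X)" by (rule tendsto_dist_iff[THEN iffD2])
  qed
qed

end


context ogdl
begin

lemma space_PM: "\<omega> \<in> space (PM I) \<Longrightarrow> k \<in> I \<Longrightarrow> \<omega> k \<in> X \<times> Y"
  by (auto simp: space_PiM PiE_iff space_rho)

lemma fst_meas: "(\<lambda>z. fst z) \<in> borel_measurable rho"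
  by (rule meas_cont_rho) (intro continuous_intros)
lemma snd_meas: "(\<lambda>z. snd z) \<in> borel_measurable rho"
  by (rule meas_cont_rho) (intro continuous_intros)

lemma PH_meas: "(\<lambda>w. phi (snd (fst w)) (snd w)) \<in> borel_measurable (rho \<Otimes>\<^sub>M borel)"
proof -
  have 1: "(\<lambda>w. (snd (fst w), snd w)) \<in> measurable (rho \<Otimes>\<^sub>M (borel :: real measure)) borel"
    by (rule borel_Pair_real[OF measurable_compose[OF measurable_fst snd_meas] measurable_snd])
  have "(\<lambda>w. (\<lambda>(y, s). phi y s) (snd (fst w), snd w)) \<in> borel_measurable (rho \<Otimes>\<^sub>M borel)"
    by (rule measurable_compose[OF 1 phi_meas])
  then show ?thesis by simp
qed

lemma DP_meas: "(\<lambda>w. dphi (snd (fst w)) (snd w)) \<in> borel_measurable (rho \<Otimes>\<^sub>M borel)"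
proof (rule borel_measurable_LIMSEQ_real)
  let ?u = "\<lambda>n w. (phi (snd (fst w)) (snd w + inverse (real (Suc n))) - phi (snd (fst w)) (snd w)) * real (Suc n)"
  show "?u n \<in> borel_measurable (rho \<Otimes>\<^sub>M borel)" for n
  proof -
    have a: "(\<lambda>w. (fst w, snd w + inverse (real (Suc n)))) \<in> measurable (rho \<Otimes>\<^sub>M borel) (rho \<Otimes>\<^sub>M borel)"
      by (intro measurable_Pair measurable_fst borel_measurable_add measurable_snd measurable_const) auto
    have "(\<lambda>w. (\<lambda>w. phi (snd (fst w)) (snd w)) (fst w, snd w + inverse (real (Suc n)))) \<in> borel_measurable (rho \<Otimes>\<^sub>M borel)"
      by (rule measurable_compose[OF a PH_meas])
    then have "(\<lambda>w. phi (snd (fst w)) (snd w + inverse (real (Suc n)))) \<in> borel_measurable (rho \<Otimes>\<^sub>M borel)" by simp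
    then show ?thesis using PH_meas by measurable
  qed
  fix w :: "('x \<times> real) \<times> real" assume w: "w \<in> space (rho \<Otimes>\<^sub>M borel)"
  then have y: "snd (fst w) \<in> Y" by (auto simp: space_pair_measure space_rho)
  define f where "f = phi (snd (fst w))"
  define x where "x = snd w"
  have D: "((\<lambda>h. (f (x + h) - f x) / h) \<longlongrightarrow> dphi (snd (fst w)) x) (at 0)"
    using DERIV_D[OF phi_deriv[OF y]] unfolding f_def .
  have s: "filterlim (\<lambda>n. inverse (real (Suc n))) (at 0) sequentially"
    unfolding filterlim_at using LIMSEQ_inverse_real_of_nat by (auto simp del: of_nat_Suc)
  have "((\<lambda>n. (f (x + inverse (real (Suc n))) - f x) / inverse (real (Suc n))) \<longlongrightarrow> dphi (snd (fst w)) x) sequentially"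
    by (rule filterlim_compose[OF D s])
  then show "(\<lambda>n. ?u n w) \<longlonglongrightarrow> dphi (snd (fst w)) (snd w)"
    unfolding f_def x_def by (simp add: divide_inverse)
qed

lemma KK_meas: "(\<lambda>w. K (fst (fst w)) (fst (snd w))) \<in> borel_measurable (rho \<Otimes>\<^sub>M rho)"
proof (rule meas_cont_rho2)
  have "continuous_on ((X \<times> Y) \<times> (X \<times> Y)) ((\<lambda>(x, x'). K x x') \<circ> (\<lambda>w. (fst (fst w), fst (snd w))))"
    by (rule continuous_on_compose[OF _ continuous_on_subset[OF K_cont]])
       (auto intro!: continuous_intros simp: mem_Times_iff)
  then show "continuous_on ((X \<times> Y) \<times> (X \<times> Y)) (\<lambda>w. K (fst (fst w)) (fst (snd w)))"
    by (simp add: comp_def)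
qed

lemma fh_meas: "(\<lambda>z. fh (fst z)) \<in> borel_measurable rho"
proof (rule meas_cont_rho)
  have "continuous_on (X \<times> Y) ((\<lambda>v. inner fH v) \<circ> Phi \<circ> fst)"
    by (intro continuous_on_compose continuous_intros continuous_on_subset[OF Phi_cont]) auto
  then show "continuous_on (X \<times> Y) (\<lambda>z. fh (fst z))" by (simp add: comp_def fh_def)
qed

lemma comp_x: "k \<in> I \<Longrightarrow> (\<lambda>\<omega>. \<omega> k) \<in> measurable (PM I) rho"
  by (rule measurable_component_singleton)

lemma fvx_from:
  assumes m: "(\<lambda>w. fv (fst w) t (fst (snd w))) \<in> borel_measurable (PM I \<Otimes>\<^sub>M rho)" and t: "t \<in> I"
  shows "(\<lambda>\<omega>. fv \<omega> t (fst (\<omega> t))) \<in> borel_measurable (PM I)"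
proof -
  have "(\<lambda>\<omega>. (\<lambda>w. fv (fst w) t (fst (snd w))) (\<omega>, \<omega> t)) \<in> borel_measurable (PM I)"
    by (rule measurable_compose[OF measurable_Pair[OF measurable_ident_sets[OF refl] comp_x[OF t]] m])
  then show ?thesis by simp
qed

lemma gr_from:
  assumes m: "(\<lambda>\<omega>. fv \<omega> t (fst (\<omega> t))) \<in> borel_measurable (PM I)" and t: "t \<in> I"
  shows "(\<lambda>\<omega>. gr \<omega> t) \<in> borel_measurable (PM I)"
proof -
  have "(\<lambda>\<omega>. (\<lambda>w. dphi (snd (fst w)) (snd w)) (\<omega> t, fv \<omega> t (fst (\<omega> t)))) \<in> borel_measurable (PM I)"
    by (rule measurable_compose[OF measurable_Pair[OF comp_x[OF t] m] DP_meas])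
  then show ?thesis by (simp add: gr_def)
qed

lemma fv_meas_all: "{..<t} \<subseteq> I \<Longrightarrow> (\<lambda>w. fv (fst w) t (fst (snd w))) \<in> borel_measurable (PM I \<Otimes>\<^sub>M rho)"
proof (induction t)
  case 0 then show ?case by (simp add: fv_def)
next
  case (Suc t)
  show ?case
  proof (cases "t = 0")
    case True then show ?thesis by (simp add: fv_def)
  next
    case False
    have tI: "t \<in> I" and sub: "{..<t} \<subseteq> I" using Suc.prems by auto
    have IH: "(\<lambda>w. fv (fst w) t (fst (snd w))) \<in> borel_measurable (PM I \<Otimes>\<^sub>M rho)" using Suc.IH sub .
    have g: "(\<lambda>\<omega>. gr \<omega> t) \<in> borel_measurable (PM I)" by (rule gr_from[OF fvx_from[OF IH tI] tI])
    have k: "(\<lambda>w. (\<lambda>w. K (fst (fst w)) (fst (snd w))) (fst w t, snd w)) \<in> borel_measurable (PM I \<Otimes>\<^sub>M rho)"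
      by (rule measurable_compose[OF measurable_Pair[OF measurable_compose[OF measurable_fst comp_x[OF tI]] measurable_snd] KK_meas])
    have "(\<lambda>w. fv (fst w) t (fst (snd w)) - eta t * gr (fst w) t * K (fst (fst w t)) (fst (snd w))) \<in> borel_measurable (PM I \<Otimes>\<^sub>M rho)"
      using IH measurable_compose[OF measurable_fst g, of rho] k
      by (intro borel_measurable_diff borel_measurable_times borel_measurable_const) auto
    then show ?thesis
    proof (rule measurable_cong[THEN iffD1, rotated])
      fix w assume w: "w \<in> space (PM I \<Otimes>\<^sub>M rho)"
      then have "fst w \<in> space (PM I)" "snd w \<in> space rho" by (auto simp: space_pair_measure)
      then have "fst (fst w t) \<in> X" "fst (snd w) \<in> X" using space_PM[OF _ tI] space_rho by (auto simp: mem_Times_iff)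
      then show "fv (fst w) t (fst (snd w)) - eta t * gr (fst w) t * K (fst (fst w t)) (fst (snd w)) = fv (fst w) (Suc t) (fst (snd w))"
        using False by (simp add: fv_Suc)
    qed
  qed
qed

lemma gr_meas: "t \<in> I \<Longrightarrow> {..<t} \<subseteq> I \<Longrightarrow> (\<lambda>\<omega>. gr \<omega> t) \<in> borel_measurable (PM I)"
  by (rule gr_from[OF fvx_from[OF fv_meas_all]]) auto

lemma fvx_meas: "t \<in> I \<Longrightarrow> {..<t} \<subseteq> I \<Longrightarrow> (\<lambda>\<omega>. fv \<omega> t (fst (\<omega> t))) \<in> borel_measurable (PM I)"
  by (rule fvx_from[OF fv_meas_all]) auto

end


lemma (in prob_space) abs_integral_le:
  fixes f :: "'a \<Rightarrow> real"
  assumes "f \<in> borel_measurable M" "\<And>x. x \<in> space M \<Longrightarrow> \<bar>f x\<bar> \<le> C"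
  shows "\<bar>\<integral>x. f x \<partial>M\<bar> \<le> C"
proof -
  have i: "integrable M f"
    by (rule integrable_const_bound[where B=C]) (use assms in auto)
  have "(\<integral>x. f x \<partial>M) \<le> C" using assms by (intro integral_le_const[OF i] AE_I2) (auto simp: abs_le_iff)
  moreover have "- C \<le> (\<integral>x. f x \<partial>M)" using assms by (intro integral_ge_const[OF i] AE_I2) (force simp: abs_le_iff)
  ultimately show ?thesis by linarith
qed

context ogdl
begin

lemma T2:
  fixes h :: "(nat \<Rightarrow> 'x \<times> real) \<times> ('x \<times> real) \<Rightarrow> real" and j :: nat
  assumes m1: "h \<in> borel_measurable (PM (UNIV - {j}) \<Otimes>\<^sub>M rho)"
    and m2: "h \<in> borel_measurable (PM UNIV \<Otimes>\<^sub>M rho)"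
    and bnd: "\<And>\<omega> z. (\<And>k. k \<noteq> j \<Longrightarrow> \<omega> k \<in> space rho) \<Longrightarrow> z \<in> space rho \<Longrightarrow> \<bar>h (\<omega>, z)\<bar> \<le> C"
    and upd: "\<And>\<omega> x z. h (fun_upd \<omega> j x, z) = h (\<omega>, z)"
  shows "(\<integral>\<omega>. h (\<omega>, \<omega> j) \<partial>PM UNIV) = (\<integral>\<omega>. (\<integral>z. h (\<omega>, z) \<partial>rho) \<partial>PM UNIV)"
proof -
  interpret R: prob_space rho by (rule rho_prob)
  interpret P1: prob_space "PM (UNIV - {j})" by (rule prob_space_PiM) (simp add: rho_prob)
  interpret PS: pair_prob_space rho "PM (UNIV - {j})" by unfold_locales
  let ?Q = "rho \<Otimes>\<^sub>M PM (UNIV - {j})"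
  let ?T = "\<lambda>w::('x \<times> real) \<times> (nat \<Rightarrow> 'x \<times> real). fun_upd (snd w) j (fst w)"
  have ins: "insert j (UNIV - {j}) = (UNIV :: nat set)" by auto
  have D: "distr ?Q (PM UNIV) (\<lambda>(x, X). X(j := x)) = PM UNIV"
    using distr_pair_PiM_eq_PiM[of "UNIV - {j}" "\<lambda>_. rho" j] rho_prob unfolding ins by simp
  have D': "distr ?Q (PM UNIV) ?T = PM UNIV"
    using D by (simp add: case_prod_beta')
  have Tm: "?T \<in> measurable ?Q (PM UNIV)"
  proof -
    have m: "(\<lambda>x. (snd x)(j := fst x)) \<in> measurable ?Q (PM ((UNIV - {j}) \<union> {j}))"
      by (rule measurable_fun_upd[OF refl measurable_snd measurable_fst])
    have eq: "(UNIV - {j}) \<union> {j} = UNIV" by auto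
    show ?thesis using m by (simp only: eq)
  qed
  have sp1: "\<And>\<omega> k. \<omega> \<in> space (PM (UNIV - {j})) \<Longrightarrow> k \<noteq> j \<Longrightarrow> \<omega> k \<in> space rho"
    using PiE_mem[of _ "UNIV - {j}" "\<lambda>_. space rho"] by (simp add: space_PiM)
  have spQ: "\<And>w k. w \<in> space ?Q \<Longrightarrow> k \<noteq> j \<Longrightarrow> snd w k \<in> space rho"
    "\<And>w. w \<in> space ?Q \<Longrightarrow> fst w \<in> space rho"
    by (simp_all add: space_pair_measure mem_Times_iff sp1)
  have H: "(\<lambda>\<omega>. h (\<omega>, \<omega> j)) \<in> borel_measurable (PM UNIV)"
    by (rule measurable_compose[OF measurable_Pair[OF measurable_ident_sets[OF refl] measurable_component_singleton] m2]) simp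
  have G: "(\<lambda>\<omega>. \<integral>z. h (\<omega>, z) \<partial>rho) \<in> borel_measurable (PM UNIV)"
    using m2 by (intro R.borel_measurable_lebesgue_integral) (simp add: case_prod_beta')
  have G1: "(\<lambda>\<omega>. \<integral>z. h (\<omega>, z) \<partial>rho) \<in> borel_measurable (PM (UNIV - {j}))"
    using m1 by (intro R.borel_measurable_lebesgue_integral) (simp add: case_prod_beta')
  have sw: "(\<lambda>w. h (snd w, fst w)) \<in> borel_measurable ?Q"
    by (rule measurable_compose[OF measurable_Pair[OF measurable_snd measurable_fst] m1])
  have int1: "integrable ?Q (\<lambda>(x, y). h (y, x))"
  proof (rule PS.P.integrable_const_bound[where B=C])
    show "AE w in ?Q. norm ((\<lambda>(x, y). h (y, x)) w) \<le> C"
      by (rule AE_I2) (auto simp: case_prod_beta' intro!: bnd spQ)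
  qed (use sw in \<open>simp add: case_prod_beta'\<close>)
  have Gb: "\<And>\<omega>. \<omega> \<in> space (PM (UNIV - {j})) \<Longrightarrow> \<bar>\<integral>z. h (\<omega>, z) \<partial>rho\<bar> \<le> C"
  proof -
    fix \<omega> :: "nat \<Rightarrow> 'x \<times> real" assume a: "\<omega> \<in> space (PM (UNIV - {j}))"
    show "\<bar>\<integral>z. h (\<omega>, z) \<partial>rho\<bar> \<le> C"
      by (rule R.abs_integral_le[OF measurable_Pair2[OF m1 a]]) (auto intro!: bnd sp1[OF a])
  qed
  have G1c: "(\<lambda>w. \<integral>z. h (snd w, z) \<partial>rho) \<in> borel_measurable ?Q"
    by (rule measurable_compose[OF measurable_snd G1])
  have int2: "integrable ?Q (\<lambda>(x, y). \<integral>z. h (y, z) \<partial>rho)"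
  proof (rule PS.P.integrable_const_bound[where B=C])
    show "AE w in ?Q. norm ((\<lambda>(x, y). \<integral>z. h (y, z) \<partial>rho) w) \<le> C"
      by (rule AE_I2) (auto simp: case_prod_beta' space_pair_measure intro!: Gb)
  qed (use G1c in \<open>simp add: case_prod_beta'\<close>)
  have "(\<integral>\<omega>. h (\<omega>, \<omega> j) \<partial>PM UNIV) = (\<integral>w. h (?T w, fst w) \<partial>?Q)"
    using integral_distr[OF Tm H] D' by simp
  also have "\<dots> = (\<integral>w. (\<lambda>(x, y). h (y, x)) w \<partial>?Q)"
    by (simp add: upd case_prod_beta')
  also have "\<dots> = (\<integral>y. (\<integral>x. h (y, x) \<partial>rho) \<partial>PM (UNIV - {j}))"
    using PS.integral_snd[OF int1] by simp
  finally have L: "(\<integral>\<omega>. h (\<omega>, \<omega> j) \<partial>PM UNIV) = (\<integral>y. (\<integral>x. h (y, x) \<partial>rho) \<partial>PM (UNIV - {j}))" .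
  have "(\<integral>\<omega>. (\<integral>z. h (\<omega>, z) \<partial>rho) \<partial>PM UNIV) = (\<integral>w. (\<integral>z. h (?T w, z) \<partial>rho) \<partial>?Q)"
    using integral_distr[OF Tm G] D' by simp
  also have "\<dots> = (\<integral>w. (\<lambda>(x, y). \<integral>z. h (y, z) \<partial>rho) w \<partial>?Q)"
    by (simp add: upd case_prod_beta')
  also have "\<dots> = (\<integral>y. (\<integral>x. (\<integral>z. h (y, z) \<partial>rho) \<partial>rho) \<partial>PM (UNIV - {j}))"
    using PS.integral_snd[OF int2] by simp
  also have "\<dots> = (\<integral>y. (\<integral>z. h (y, z) \<partial>rho) \<partial>PM (UNIV - {j}))"
    by (simp add: R.prob_space)
  finally show ?thesis using L by simp
qed

end


context ogdl
begin

lemma T1: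
  fixes f :: "'x \<times> real \<Rightarrow> real"
  assumes fm: "f \<in> borel_measurable rho" and fb: "\<And>z. z \<in> space rho \<Longrightarrow> \<bar>f z\<bar> \<le> C"
  shows "(\<integral>\<omega>. f (\<omega> i) \<partial>PM UNIV) = (\<integral>z. f z \<partial>rho)"
proof -
  interpret R: prob_space rho by (rule rho_prob)
  interpret P: prob_space "PM UNIV" by (rule prob_space_PiM) (simp add: rho_prob)
  have "(\<integral>\<omega>. (\<lambda>w. f (snd w)) (\<omega>, \<omega> i) \<partial>PM UNIV) = (\<integral>\<omega>. (\<integral>z. (\<lambda>w. f (snd w)) (\<omega>, z) \<partial>rho) \<partial>PM UNIV)"
    by (rule T2[where C=C]) (auto intro: measurable_compose[OF measurable_snd fm] fb)
  then show ?thesis by (simp add: P.prob_space)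
qed

lemma ai_meas: "i \<in> I \<Longrightarrow> a \<in> borel_measurable rho \<Longrightarrow> (\<lambda>w. a (fst w i)) \<in> borel_measurable (PM I \<Otimes>\<^sub>M M)"
  by (rule measurable_compose[OF measurable_compose[OF measurable_fst comp_x]]) auto

lemma Ki_meas: "i \<in> I \<Longrightarrow> (\<lambda>w. K (fst (fst w i)) (fst (snd w))) \<in> borel_measurable (PM I \<Otimes>\<^sub>M rho)"
proof -
  assume i: "i \<in> I"
  have "(\<lambda>w. (\<lambda>w. K (fst (fst w)) (fst (snd w))) (fst w i, snd w)) \<in> borel_measurable (PM I \<Otimes>\<^sub>M rho)"
    by (rule measurable_compose[OF measurable_Pair[OF measurable_compose[OF measurable_fst comp_x[OF i]] measurable_snd] KK_meas])
  then show ?thesis by simp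
qed

lemma Q_nonneg:
  fixes a :: "'x \<times> real \<Rightarrow> real"
  assumes am: "a \<in> borel_measurable rho" and ab: "\<And>z. z \<in> space rho \<Longrightarrow> \<bar>a z\<bar> \<le> A"
  shows "0 \<le> (\<integral>z'. a z' * (\<integral>z. a z * K (fst z') (fst z) \<partial>rho) \<partial>rho)"
proof -
  interpret R: prob_space rho by (rule rho_prob)
  interpret P: prob_space "PM UNIV" by (rule prob_space_PiM) (simp add: rho_prob)
  have A0: "0 \<le> A" using ab R.not_empty by (meson abs_ge_zero ex_in_conv order_trans)
  define \<psi> where "\<psi> (z' :: 'x \<times> real) = (\<integral>z. a z * K (fst z') (fst z) \<partial>rho)" for z'
  define Q where "Q = (\<integral>z'. a z' * \<psi> z' \<partial>rho)"
  define P0 where "P0 = (\<integral>z. a z * a z * K (fst z) (fst z) \<partial>rho)"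
  have spx: "z \<in> space rho \<Longrightarrow> fst z \<in> X" for z by (auto simp: space_rho mem_Times_iff)
  have Kb: "z \<in> space rho \<Longrightarrow> z' \<in> space rho \<Longrightarrow> \<bar>K (fst z) (fst z')\<bar> \<le> \<kappa>\<^sup>2" for z z'
    using K_bound spx by auto
  have aab: "z \<in> space rho \<Longrightarrow> z' \<in> space rho \<Longrightarrow> \<bar>a z * a z'\<bar> \<le> A * A" for z z'
    using ab by (simp add: abs_mult mult_mono')
  have prodb: "z \<in> space rho \<Longrightarrow> z' \<in> space rho \<Longrightarrow> z'' \<in> space rho \<Longrightarrow> z''' \<in> space rho \<Longrightarrow>
     \<bar>a z * a z' * K (fst z'') (fst z''')\<bar> \<le> A * A * \<kappa>\<^sup>2" for z z' z'' z'''
    using aab[of z z'] Kb[of z'' z'''] by (simp add: abs_mult mult_mono' del: power2_abs)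
  have psim: "\<psi> \<in> borel_measurable rho"
  proof -
    have "(\<lambda>w. a (snd w) * K (fst (fst w)) (fst (snd w))) \<in> borel_measurable (rho \<Otimes>\<^sub>M rho)"
      using measurable_compose[OF measurable_snd am] KK_meas by (intro borel_measurable_times) auto
    then show ?thesis unfolding \<psi>_def by (intro R.borel_measurable_lebesgue_integral) (simp add: case_prod_beta')
  qed
  have psib: "z' \<in> space rho \<Longrightarrow> \<bar>\<psi> z'\<bar> \<le> A * \<kappa>\<^sup>2" for z'
  proof -
    assume z': "z' \<in> space rho"
    have m: "(\<lambda>z. a z * K (fst z') (fst z)) \<in> borel_measurable rho"
      using am measurable_Pair2[OF KK_meas z'] by (intro borel_measurable_times) auto
    show ?thesis unfolding \<psi>_def
    proof (rule R.abs_integral_le[OF m])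
      fix z assume z: "z \<in> space rho"
      show "\<bar>a z * K (fst z') (fst z)\<bar> \<le> A * \<kappa>\<^sup>2"
        using mult_mono[OF ab[OF z] Kb[OF z' z]] A0 by (simp add: abs_mult)
    qed
  qed
  have off: "(\<integral>\<omega>. a (\<omega> i) * a (\<omega> j) * K (fst (\<omega> i)) (fst (\<omega> j)) \<partial>PM UNIV) = Q" if ij: "i < j" for i j
  proof -
    let ?h = "\<lambda>w. a (fst w i) * a (snd w) * K (fst (fst w i)) (fst (snd w))"
    have mI: "?h \<in> borel_measurable (PM I \<Otimes>\<^sub>M rho)" if "i \<in> I" for I
      using ai_meas[OF that am] measurable_compose[OF measurable_snd am] Ki_meas[OF that]
      by (intro borel_measurable_times) auto
    have "(\<integral>\<omega>. ?h (\<omega>, \<omega> j) \<partial>PM UNIV) = (\<integral>\<omega>. (\<integral>z. ?h (\<omega>, z) \<partial>rho) \<partial>PM UNIV)"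
    proof (rule T2[where C="A * A * \<kappa>\<^sup>2"])
      show "?h \<in> borel_measurable (PM (UNIV - {j}) \<Otimes>\<^sub>M rho)" using mI ij by auto
      show "?h \<in> borel_measurable (PM UNIV \<Otimes>\<^sub>M rho)" using mI by auto
      fix \<omega> :: "nat \<Rightarrow> 'x \<times> real" and z assume "\<And>k. k \<noteq> j \<Longrightarrow> \<omega> k \<in> space rho" "z \<in> space rho"
      then show "\<bar>?h (\<omega>, z)\<bar> \<le> A * A * \<kappa>\<^sup>2" using ij prodb by auto
    next
      fix \<omega> :: "nat \<Rightarrow> 'x \<times> real" and x z
      show "?h (fun_upd \<omega> j x, z) = ?h (\<omega>, z)" using ij by simp
    qed
    also have "\<dots> = (\<integral>\<omega>. a (\<omega> i) * \<psi> (\<omega> i) \<partial>PM UNIV)"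
      by (simp add: \<psi>_def mult.assoc)
    also have "\<dots> = Q" unfolding Q_def
      by (rule T1[where C="A * (A * \<kappa>\<^sup>2)"]) (use am psim ab psib A0 in \<open>auto simp: abs_mult intro!: mult_mono\<close>)
    finally show ?thesis by simp
  qed
  have diag: "(\<integral>\<omega>. a (\<omega> i) * a (\<omega> i) * K (fst (\<omega> i)) (fst (\<omega> i)) \<partial>PM UNIV) = P0" for i
  proof -
    have m: "(\<lambda>z. a z * a z * K (fst z) (fst z)) \<in> borel_measurable rho"
    proof -
      have "(\<lambda>z. (\<lambda>w. K (fst (fst w)) (fst (snd w))) (z, z)) \<in> borel_measurable rho"
        by (rule measurable_compose[OF measurable_Pair[OF measurable_ident_sets[OF refl] measurable_ident_sets[OF refl]] KK_meas])
      then show ?thesis using am by (intro borel_measurable_times) auto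
    qed
    show ?thesis unfolding P0_def by (rule T1[OF m, where C="A * A * \<kappa>\<^sup>2"]) (use prodb in auto)
  qed
  have int: "integrable (PM UNIV) (\<lambda>\<omega>. a (\<omega> i) * a (\<omega> j) * K (fst (\<omega> i)) (fst (\<omega> j)))" for i j
  proof (rule P.integrable_const_bound[where B="A * A * \<kappa>\<^sup>2"])
    show "AE \<omega> in PM UNIV. norm (a (\<omega> i) * a (\<omega> j) * K (fst (\<omega> i)) (fst (\<omega> j))) \<le> A * A * \<kappa>\<^sup>2"
      by (rule AE_I2) (use prodb space_PM in \<open>auto simp: space_rho\<close>)
    have "(\<lambda>\<omega>. (\<lambda>w. K (fst (fst w)) (fst (snd w))) (\<omega> i, \<omega> j)) \<in> borel_measurable (PM UNIV)"
      by (rule measurable_compose[OF measurable_Pair[OF comp_x comp_x] KK_meas]) auto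
    then show "(\<lambda>\<omega>. a (\<omega> i) * a (\<omega> j) * K (fst (\<omega> i)) (fst (\<omega> j))) \<in> borel_measurable (PM UNIV)"
      using measurable_compose[OF comp_x am] by (intro borel_measurable_times) auto
  qed
  have E: "(\<integral>\<omega>. a (\<omega> i) * a (\<omega> j) * K (fst (\<omega> i)) (fst (\<omega> j)) \<partial>PM UNIV) = (if i = j then P0 else Q)" for i j
  proof (cases i j rule: linorder_cases)
    case less then show ?thesis using off by simp
  next
    case equal then show ?thesis using diag by simp
  next
    case greater
    have "(\<integral>\<omega>. a (\<omega> i) * a (\<omega> j) * K (fst (\<omega> i)) (fst (\<omega> j)) \<partial>PM UNIV)
        = (\<integral>\<omega>. a (\<omega> j) * a (\<omega> i) * K (fst (\<omega> j)) (fst (\<omega> i)) \<partial>PM UNIV)"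
    proof (rule Bochner_Integration.integral_cong[OF refl])
      fix \<omega> assume "\<omega> \<in> space (PM UNIV)"
      then have "fst (\<omega> i) \<in> X" "fst (\<omega> j) \<in> X" using space_PM[of \<omega> UNIV] by (auto simp: mem_Times_iff)
      then show "a (\<omega> i) * a (\<omega> j) * K (fst (\<omega> i)) (fst (\<omega> j)) = a (\<omega> j) * a (\<omega> i) * K (fst (\<omega> j)) (fst (\<omega> i))"
        using K_sym by (simp add: mult_ac)
    qed
    then show ?thesis using off[OF greater] greater by simp
  qed
  have nn: "0 \<le> real n * P0 + (real n * real n - real n) * Q" for n
  proof -
    have pt: "0 \<le> (\<Sum>i<n. \<Sum>j<n. a (\<omega> i) * a (\<omega> j) * K (fst (\<omega> i)) (fst (\<omega> j)))" if "\<omega> \<in> space (PM UNIV)" for \<omega>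
    proof -
      have X: "\<And>i. fst (\<omega> i) \<in> X" using space_PM[OF that] by (auto simp: mem_Times_iff)
      have "(\<Sum>i<n. \<Sum>j<n. a (\<omega> i) * a (\<omega> j) * K (fst (\<omega> i)) (fst (\<omega> j)))
          = inner (\<Sum>i<n. a (\<omega> i) *\<^sub>R Phi (fst (\<omega> i))) (\<Sum>j<n. a (\<omega> j) *\<^sub>R Phi (fst (\<omega> j)))"
        apply (simp add: inner_sum_left inner_sum_right K_feature[OF X X] sum_distrib_left)
        apply (subst sum.swap)
        apply (simp add: mult_ac)
        done
      also have "\<dots> \<ge> 0" by simp
      finally show ?thesis .
    qed
    have "0 \<le> (\<integral>\<omega>. (\<Sum>i<n. \<Sum>j<n. a (\<omega> i) * a (\<omega> j) * K (fst (\<omega> i)) (fst (\<omega> j))) \<partial>PM UNIV)"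
      by (rule integral_nonneg_AE) (rule AE_I2, rule pt)
    also have "\<dots> = (\<Sum>i<n. \<Sum>j<n. (\<integral>\<omega>. a (\<omega> i) * a (\<omega> j) * K (fst (\<omega> i)) (fst (\<omega> j)) \<partial>PM UNIV))"
      using int by (simp add: Bochner_Integration.integral_sum integrable_sum)
    also have "\<dots> = (\<Sum>i<n. \<Sum>j<n. (if i = j then P0 else Q))" by (simp add: E)
    also have "\<dots> = (\<Sum>i<n. P0 + (real n - 1) * Q)"
    proof (rule sum.cong[OF refl])
      fix i assume i: "i \<in> {..<n}"
      have "(\<Sum>j<n. (if i = j then P0 else Q)) = (if i = i then P0 else Q) + (\<Sum>j\<in>{..<n} - {i}. (if i = j then P0 else Q))"
        by (rule sum.remove) (use i in auto)
      also have "(\<Sum>j\<in>{..<n} - {i}. (if i = j then P0 else Q)) = (\<Sum>j\<in>{..<n} - {i}. Q)"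
        by (rule sum.cong) auto
      finally have "(\<Sum>j<n. (if i = j then P0 else Q)) = (\<Sum>j\<in>{..<n} - {i}. Q) + P0" by simp
      also have "\<dots> = (real n - 1) * Q + P0"
      proof -
        have c: "card ({..<n} - {i}) = n - 1" using i by (simp add: card_Diff_singleton)
        have "n \<ge> 1" using i by simp
        then have "real (n - 1) = real n - 1" by (simp add: of_nat_diff)
        then show ?thesis by (simp only: sum_constant c)
      qed
      finally show "(\<Sum>j<n. (if i = j then P0 else Q)) = P0 + (real n - 1) * Q" by simp
    qed
    also have "\<dots> = real n * P0 + (real n * real n - real n) * Q" by (simp add: algebra_simps)
    finally show ?thesis .
  qed
  show ?thesis
  proof (rule ccontr)
    assume "\<not> 0 \<le> (\<integral>z'. a z' * (\<integral>z. a z * K (fst z') (fst z) \<partial>rho) \<partial>rho)"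
    then have Qn: "Q < 0" unfolding Q_def \<psi>_def by simp
    define n where "n = nat \<lceil>\<bar>P0\<bar> / (- Q)\<rceil> + 2"
    have n2: "real n \<ge> \<bar>P0\<bar> / (- Q) + 2" unfolding n_def by linarith
    then have "(real n - 1) * (- Q) > \<bar>P0\<bar>" using Qn
      by (smt (verit, best) divide_le_eq mult_le_cancel_right mult_minus_right)
    moreover have "0 \<le> real n * (P0 + (real n - 1) * Q)" using nn[of n] by (simp add: algebra_simps)
    moreover have "real n > 0" using n2 Qn by (smt (verit) divide_nonneg_pos abs_ge_zero)
    ultimately show False
      by (smt (verit, best) abs_ge_self mult_minus_right zero_le_mult_iff)
  qed
qed

end


lemma tele_D:
  fixes D \<eta> a :: "nat \<Rightarrow> real"
  assumes st: "\<And>k. m \<le> k \<Longrightarrow> D (Suc k) \<le> D k - \<eta> k * a k + C * (\<eta> k)\<^sup>2"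
    and mn: "m \<le> n"
  shows "D n + (\<Sum>k\<in>{m..<n}. \<eta> k * a k) \<le> D m + C * (\<Sum>k\<in>{m..<n}. (\<eta> k)\<^sup>2)"
  using mn
proof (induction n rule: dec_induct)
  case base then show ?case by simp
next
  case (step n)
  have "D (Suc n) + (\<Sum>k\<in>{m..<Suc n}. \<eta> k * a k) = D (Suc n) + \<eta> n * a n + (\<Sum>k\<in>{m..<n}. \<eta> k * a k)"
    using step(1) by simp
  also have "\<dots> \<le> D n + C * (\<eta> n)\<^sup>2 + (\<Sum>k\<in>{m..<n}. \<eta> k * a k)" using st[OF step(1)] by simp
  also have "\<dots> \<le> D m + C * (\<Sum>k\<in>{m..<n}. (\<eta> k)\<^sup>2) + C * (\<eta> n)\<^sup>2" using step(3) by simp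
  also have "\<dots> = D m + C * (\<Sum>k\<in>{m..<Suc n}. (\<eta> k)\<^sup>2)" using step(1) by (simp add: algebra_simps)
  finally show ?case .
qed

lemma tele_a:
  fixes a b :: "nat \<Rightarrow> real"
  assumes st: "\<And>k. m \<le> k \<Longrightarrow> k < n \<Longrightarrow> a (Suc k) \<le> a k + b k"
    and mn: "m \<le> n"
  shows "a n \<le> a m + (\<Sum>k\<in>{m..<n}. b k)"
  using mn st
proof (induction n rule: dec_induct)
  case base then show ?case by simp
next
  case (step n)
  have "a (Suc n) \<le> a n + b n" using step by simp
  also have "a n \<le> a m + (\<Sum>k\<in>{m..<n}. b k)" using step by simp
  finally show ?case using step(1) by simp
qed

lemma eta_small:
  fixes \<eta> :: "nat \<Rightarrow> real"
  assumes ep: "\<And>t. 1 \<le> t \<Longrightarrow> 0 < \<eta> t" and al: "0 < \<alpha>"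
    and lim: "(\<lambda>t. \<eta> t powr \<alpha> * (\<Sum>k=1..t. (\<eta> k)\<^sup>2)) \<longlonglongrightarrow> 0"
  shows "(\<lambda>t. \<eta> t powr \<alpha>) \<longlonglongrightarrow> 0"
proof (rule tendsto_sandwich[where f="\<lambda>_. 0" and h="\<lambda>t. \<eta> t powr \<alpha> * (\<Sum>k=1..t. (\<eta> k)\<^sup>2) / (\<eta> 1)\<^sup>2"])
  show "eventually (\<lambda>t. 0 \<le> \<eta> t powr \<alpha>) sequentially" by simp
  have e1: "0 < (\<eta> 1)\<^sup>2" using ep[of 1] by simp
  show "eventually (\<lambda>t. \<eta> t powr \<alpha> \<le> \<eta> t powr \<alpha> * (\<Sum>k=1..t. (\<eta> k)\<^sup>2) / (\<eta> 1)\<^sup>2) sequentially"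
    unfolding eventually_sequentially
  proof (intro exI allI impI)
    fix t :: nat assume t: "1 \<le> t"
    have "(\<eta> 1)\<^sup>2 \<le> (\<Sum>k=1..t. (\<eta> k)\<^sup>2)"
      using t by (intro member_le_sum) auto
    then have "\<eta> t powr \<alpha> * (\<eta> 1)\<^sup>2 \<le> \<eta> t powr \<alpha> * (\<Sum>k=1..t. (\<eta> k)\<^sup>2)"
      by (intro mult_left_mono) auto
    then show "\<eta> t powr \<alpha> \<le> \<eta> t powr \<alpha> * (\<Sum>k=1..t. (\<eta> k)\<^sup>2) / (\<eta> 1)\<^sup>2"
      using e1 by (simp add: field_simps)
  qed
  show "(\<lambda>t. \<eta> t powr \<alpha> * (\<Sum>k=1..t. (\<eta> k)\<^sup>2) / (\<eta> 1)\<^sup>2) \<longlonglongrightarrow> 0"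
    using tendsto_divide[OF lim tendsto_const[of "(\<eta> 1)\<^sup>2"]] e1 by simp
qed simp

lemma eta_le:
  fixes \<eta> :: "nat \<Rightarrow> real"
  assumes ep: "\<And>t. 1 \<le> t \<Longrightarrow> 0 < \<eta> t" and al: "0 < \<alpha>"
    and p: "(\<lambda>t. \<eta> t powr \<alpha>) \<longlonglongrightarrow> 0" and d: "0 < \<delta>"
  shows "\<exists>N\<ge>1. \<forall>t\<ge>N. \<eta> t \<le> \<delta>"
proof -
  have "0 < \<delta> powr \<alpha>" using d by simp
  from order_tendstoD(2)[OF p this] obtain N where N: "\<And>t. t \<ge> N \<Longrightarrow> \<eta> t powr \<alpha> < \<delta> powr \<alpha>"
    unfolding eventually_sequentially by blast
  show ?thesis
  proof (intro exI[of _ "max N 1"] conjI allI impI)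
    fix t assume t: "max N 1 \<le> t"
    show "\<eta> t \<le> \<delta>"
    proof (rule ccontr)
      assume "\<not> \<eta> t \<le> \<delta>"
      then have "\<delta> powr \<alpha> \<le> \<eta> t powr \<alpha>" using d al by (intro powr_mono2) auto
      then show False using N[of t] t by simp
    qed
  qed simp
qed

lemma RA:
  fixes a D \<eta> :: "nat \<Rightarrow> real" and \<alpha> C :: real
  assumes a0: "\<And>t. 1 \<le> t \<Longrightarrow> 0 \<le> a t" and D0: "\<And>t. 1 \<le> t \<Longrightarrow> 0 \<le> D t"
    and ep: "\<And>t. 1 \<le> t \<Longrightarrow> 0 < \<eta> t" and C: "0 < C" and al: "0 < \<alpha>" "\<alpha> \<le> 1"
    and L1: "\<And>t. 1 \<le> t \<Longrightarrow> D (Suc t) \<le> D t - 2 * \<eta> t * a t + C * (\<eta> t)\<^sup>2 * (1 + a t)"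
    and L2: "\<And>t. 1 \<le> t \<Longrightarrow> a (Suc t) \<le> a t + C * \<eta> t powr (1 + \<alpha>) * (1 + a t)"
    and div: "filterlim (\<lambda>n. \<Sum>t=1..n. \<eta> t) at_top sequentially"
    and lim: "(\<lambda>t. \<eta> t powr \<alpha> * (\<Sum>k=1..t. (\<eta> k)\<^sup>2)) \<longlonglongrightarrow> 0"
  shows "a \<longlonglongrightarrow> 0"
proof -
  define Sn where "Sn n = (\<Sum>k\<in>{1..<n}. (\<eta> k)\<^sup>2)" for n
  define W where "W m n = (\<Sum>k\<in>{m..<n}. \<eta> k)" for m n
  define P where "P m n = (\<Sum>k\<in>{m..<n}. (\<eta> k)\<^sup>2)" for m n
  have Sn0: "0 \<le> Sn n" for n unfolding Sn_def by (intro sum_nonneg) auto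
  have P0: "0 \<le> P m n" for m n unfolding P_def by (intro sum_nonneg) auto
  have Sn_split: "Sn n = Sn m + P m n" if "1 \<le> m" "m \<le> n" for m n
    unfolding Sn_def P_def using sum.atLeastLessThan_concat[OF that, of "\<lambda>k. (\<eta> k)\<^sup>2"] by simp
  have P_le: "P m n \<le> Sn n" if "1 \<le> m" for m n
  proof (cases "m \<le> n")
    case True then show ?thesis using Sn_split[OF that True] Sn0[of m] by simp
  next
    case False then show ?thesis using Sn0[of n] by (simp add: P_def)
  qed
  have Sn_mono: "Sn m \<le> Sn n" if "m \<le> n" for m n
    unfolding Sn_def by (rule sum_mono2) (use that in auto)
  have Sn_eq: "(\<Sum>k=1..t. (\<eta> k)\<^sup>2) = Sn (Suc t)" for t
    unfolding Sn_def by (simp add: atLeastLessThanSuc_atLeastAtMost)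
  have pw: "(\<lambda>t. \<eta> t powr \<alpha>) \<longlonglongrightarrow> 0" by (rule eta_small[OF ep al(1) lim])
  have small: "\<exists>N\<ge>1. \<forall>t\<ge>N. \<eta> t \<le> \<delta>" if "0 < \<delta>" for \<delta>
    by (rule eta_le[OF ep al(1) pw that])
  have th: "(\<lambda>t. \<eta> t powr \<alpha> * (1 + Sn (Suc t))) \<longlonglongrightarrow> 0"
  proof -
    have "(\<lambda>t. \<eta> t powr \<alpha> + \<eta> t powr \<alpha> * (\<Sum>k=1..t. (\<eta> k)\<^sup>2)) \<longlonglongrightarrow> 0 + 0"
      by (intro tendsto_add pw lim)
    then have "(\<lambda>t. \<eta> t powr \<alpha> + \<eta> t powr \<alpha> * Sn (Suc t)) \<longlonglongrightarrow> 0" unfolding Sn_eq by simp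
    then show ?thesis by (simp add: algebra_simps)
  qed
  have theta: "\<exists>N. \<forall>t\<ge>N. \<eta> t powr \<alpha> * (1 + Sn (Suc t)) \<le> \<theta>" if "0 < \<theta>" for \<theta>
  proof -
    from order_tendstoD(2)[OF th that] show ?thesis
      unfolding eventually_sequentially by (meson less_imp_le)
  qed
  obtain t0 where t0: "1 \<le> t0" "\<And>t. t0 \<le> t \<Longrightarrow> \<eta> t \<le> 1 / C"
    using small[of "1 / C"] C by auto
  have L1': "D (Suc k) \<le> D k - \<eta> k * a k + C * (\<eta> k)\<^sup>2" if k: "t0 \<le> k" for k
  proof -
    have k1: "1 \<le> k" using k t0 by simp
    have "C * \<eta> k \<le> 1" using t0(2)[OF k] C by (simp add: field_simps)
    then have "(C * \<eta> k) * (\<eta> k * a k) \<le> 1 * (\<eta> k * a k)"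
      using ep[OF k1] a0[OF k1] by (intro mult_right_mono) auto
    then have "C * (\<eta> k)\<^sup>2 * (1 + a k) \<le> C * (\<eta> k)\<^sup>2 + \<eta> k * a k"
      by (simp add: power2_eq_square algebra_simps)
    then show ?thesis using L1[OF k1] by linarith
  qed
  define D0v where "D0v = D t0"
  have D0v: "0 \<le> D0v" unfolding D0v_def using D0 t0 by simp
  have five: "(\<Sum>k\<in>{m..<n}. \<eta> k * a k) \<le> D0v + 2 * C * Sn n" if mn: "t0 \<le> m" "m \<le> n" for m n
  proof -
    have m1: "1 \<le> m" using mn t0 by simp
    have A1: "D n + (\<Sum>k\<in>{m..<n}. \<eta> k * a k) \<le> D m + C * P m n"
      unfolding P_def by (rule tele_D[OF _ mn(2)]) (use L1' mn in auto)
    have A2: "D m + (\<Sum>k\<in>{t0..<m}. \<eta> k * a k) \<le> D t0 + C * P t0 m"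
      unfolding P_def by (rule tele_D[OF _ mn(1)]) (use L1' in auto)
    have s0: "0 \<le> (\<Sum>k\<in>{t0..<m}. \<eta> k * a k)"
    proof (rule sum_nonneg)
      fix k assume "k \<in> {t0..<m}"
      then have k: "1 \<le> k" using t0 by simp
      show "0 \<le> \<eta> k * a k" using less_imp_le[OF ep[OF k]] a0[OF k] by simp
    qed
    have "C * P t0 m \<le> C * Sn n" using P_le[OF t0(1), of m] Sn_mono[OF mn(2)] C by simp
    moreover have "C * P m n \<le> C * Sn n" using P_le[OF m1, of n] C by simp
    moreover have "0 \<le> D n" using D0 m1 mn by simp
    ultimately show ?thesis using A1 A2 s0 unfolding D0v_def by linarith
  qed
  have Pdel: "P m n \<le> \<delta> * W m n" if "1 \<le> m" "\<And>k. m \<le> k \<Longrightarrow> \<eta> k \<le> \<delta>" for m n \<delta>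
    unfolding P_def W_def sum_distrib_left
  proof (rule sum_mono)
    fix k assume "k \<in> {m..<n}"
    then have k: "m \<le> k" by simp
    then have "0 < \<eta> k" using ep that(1) by simp
    then show "(\<eta> k)\<^sup>2 \<le> \<delta> * \<eta> k" using that(2)[OF k] by (simp add: power2_eq_square)
  qed
  have main: "\<exists>N. \<forall>t\<ge>N. a t \<le> \<epsilon>" if e: "0 < \<epsilon>" "\<epsilon> \<le> 1" for \<epsilon>
  proof -
    define \<delta> where "\<delta> = min (\<epsilon> / (8 * C)) 1"
    have d0: "0 < \<delta>" "\<delta> \<le> 1" "\<delta> \<le> \<epsilon> / (8 * C)" unfolding \<delta>_def using e C by auto
    have d8: "8 * C * \<delta> \<le> \<epsilon>" using d0(3) C by (simp add: field_simps)
    define K0 where "K0 = 2 * D0v + 4 * C + 1"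
    have K0: "0 < K0" "2 * D0v \<le> K0" "4 * C \<le> K0" unfolding K0_def using D0v C by auto
    define \<theta> where "\<theta> = \<epsilon>\<^sup>2 / (8 * C * K0)"
    have th0: "0 < \<theta>" unfolding \<theta>_def using e C K0 by simp
    obtain N1 where N1: "1 \<le> N1" "\<And>t. N1 \<le> t \<Longrightarrow> \<eta> t \<le> \<delta>" using small[OF d0(1)] by auto
    obtain N2 where N2: "\<And>t. N2 \<le> t \<Longrightarrow> \<eta> t powr \<alpha> * (1 + Sn (Suc t)) \<le> \<theta>" using theta[OF th0] by auto
    define N0 where "N0 = max (max N1 N2) t0"
    have N0: "1 \<le> N0" "t0 \<le> N0" "N1 \<le> N0" "N2 \<le> N0" unfolding N0_def using t0 by auto
    have stepA: "\<exists>j\<ge>N. a j < \<epsilon> / 2" for N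
    proof (rule ccontr)
      assume "\<not> (\<exists>j\<ge>N. a j < \<epsilon> / 2)"
      then have big: "\<And>j. N \<le> j \<Longrightarrow> \<epsilon> / 2 \<le> a j" by force
      define M where "M = max N N0"
      have M: "N \<le> M" "N0 \<le> M" unfolding M_def by auto
      have M1: "1 \<le> M" using M N0 by simp
      define Bd where "Bd = (4 / \<epsilon>) * (D0v + 2 * C * Sn M)"
      have Wb: "W M n \<le> Bd" if n: "M \<le> n" for n
      proof -
        have "(\<epsilon> / 2) * W M n = (\<Sum>k\<in>{M..<n}. (\<epsilon> / 2) * \<eta> k)" unfolding W_def
          by (rule sum_distrib_left)
        also have "\<dots> \<le> (\<Sum>k\<in>{M..<n}. \<eta> k * a k)"
        proof (rule sum_mono)
          fix k assume "k \<in> {M..<n}"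
          then have k: "M \<le> k" by simp
          then have "\<eta> k * (\<epsilon> / 2) \<le> \<eta> k * a k"
            using big[of k] M ep[of k] M1 by (intro mult_left_mono) auto
          then show "(\<epsilon> / 2) * \<eta> k \<le> \<eta> k * a k" by (simp add: mult.commute)
        qed
        also have "\<dots> \<le> D0v + 2 * C * Sn n" by (rule five) (use M N0 n in auto)
        also have "Sn n = Sn M + P M n" by (rule Sn_split[OF M1 n])
        also have "P M n \<le> \<delta> * W M n" by (rule Pdel) (use M1 M N0 N1 in auto)
        finally have "(\<epsilon> / 2) * W M n \<le> D0v + 2 * C * (Sn M + \<delta> * W M n)"
          using C by (smt (verit) mult_left_mono)
        moreover have "2 * C * (\<delta> * W M n) \<le> (\<epsilon> / 4) * W M n"
        proof -
          have "0 \<le> W M n" unfolding W_def using ep M1 by (intro sum_nonneg) (auto intro: less_imp_le)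
          moreover have "2 * C * \<delta> \<le> \<epsilon> / 4" using d8 by simp
          ultimately show ?thesis by (metis mult.assoc mult_right_mono)
        qed
        ultimately have "(\<epsilon> / 4) * W M n \<le> D0v + 2 * C * Sn M" by (simp add: algebra_simps)
        then show ?thesis unfolding Bd_def using e by (simp add: field_simps)
      qed
      have "eventually (\<lambda>n. (\<Sum>t=1..n. \<eta> t) \<ge> Bd + W 1 M + 1) sequentially"
        using div by (simp add: filterlim_at_top)
      then obtain n0 where n0: "\<And>n. n \<ge> n0 \<Longrightarrow> (\<Sum>t=1..n. \<eta> t) \<ge> Bd + W 1 M + 1"
        unfolding eventually_sequentially by blast
      define n where "n = max n0 M"
      have "(\<Sum>t=1..n. \<eta> t) = W 1 (Suc n)" unfolding W_def by (simp add: atLeastLessThanSuc_atLeastAtMost)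
      also have "\<dots> = W 1 M + W M (Suc n)" unfolding W_def
        by (rule sum.atLeastLessThan_concat[symmetric]) (use M1 n_def in auto)
      finally have "(\<Sum>t=1..n. \<eta> t) = W 1 M + W M (Suc n)" .
      moreover have "W M (Suc n) \<le> Bd" by (rule Wb) (simp add: n_def)
      moreover have "(\<Sum>t=1..n. \<eta> t) \<ge> Bd + W 1 M + 1" by (rule n0) (simp add: n_def)
      ultimately show False by linarith
    qed
    show ?thesis
    proof (rule ccontr)
      assume "\<not> (\<exists>N. \<forall>t\<ge>N. a t \<le> \<epsilon>)"
      then have freq: "\<And>N. \<exists>t\<ge>N. \<epsilon> < a t" by (meson not_le)
      obtain j0 where j0: "N0 \<le> j0" "a j0 < \<epsilon> / 2" using stepA by blast
      obtain \<tau>0 where tau0: "Suc j0 \<le> \<tau>0" "\<epsilon> < a \<tau>0" using freq by blast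
      define \<tau> where "\<tau> = (LEAST \<tau>. j0 < \<tau> \<and> \<epsilon> < a \<tau>)"
      have tau: "j0 < \<tau>" "\<epsilon> < a \<tau>" unfolding \<tau>_def
        using LeastI[of "\<lambda>\<tau>. j0 < \<tau> \<and> \<epsilon> < a \<tau>" \<tau>0] tau0 by auto
      have below: "a k \<le> \<epsilon>" if "j0 < k" "k < \<tau>" for k
        using not_less_Least[of k "\<lambda>\<tau>. j0 < \<tau> \<and> \<epsilon> < a \<tau>"] that unfolding \<tau>_def[symmetric] by auto
      define j where "j = (GREATEST k. j0 \<le> k \<and> k < \<tau> \<and> a k < \<epsilon> / 2)"
      have jP: "j0 \<le> j \<and> j < \<tau> \<and> a j < \<epsilon> / 2" unfolding j_def
        by (rule GreatestI_nat[of _ j0 \<tau>]) (use j0 tau in auto)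
      have jmax: "\<epsilon> / 2 \<le> a k" if "j < k" "k < \<tau>" for k
      proof (rule ccontr)
        assume "\<not> \<epsilon> / 2 \<le> a k"
        then have "k \<le> j" unfolding j_def
          by (intro Greatest_le_nat[of _ k \<tau>]) (use that jP in auto)
        then show False using that by simp
      qed
      have jN: "N0 \<le> j" "1 \<le> j" "t0 \<le> j" "N1 \<le> j" "N2 \<le> j" using jP j0 N0 by auto
      have win: "a k \<le> \<epsilon>" if "j \<le> k" "k < \<tau>" for k
      proof (cases "k = j")
        case True then show ?thesis using jP e by simp
      next
        case False then show ?thesis using below[of k] that jP by simp
      qed
      define s where "s = Sn j"
      have s0: "0 \<le> s" unfolding s_def by (rule Sn0)
      have etapow: "\<eta> k powr (1 + \<alpha>) \<le> \<eta> k * (\<theta> / (1 + s))" if k: "j \<le> k" for k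
      proof -
        have k1: "1 \<le> k" using k jN by simp
        have ek: "0 < \<eta> k" using ep[OF k1] .
        have "\<eta> k powr \<alpha> * (1 + Sn (Suc k)) \<le> \<theta>" using N2 k jN by simp
        moreover have "\<eta> k powr \<alpha> * (1 + s) \<le> \<eta> k powr \<alpha> * (1 + Sn (Suc k))"
          unfolding s_def using Sn_mono[of j "Suc k"] k by (intro mult_left_mono) auto
        ultimately have "\<eta> k powr \<alpha> * (1 + s) \<le> \<theta>" by linarith
        then have "\<eta> k powr \<alpha> \<le> \<theta> / (1 + s)" using s0 by (simp add: field_simps)
        then have "\<eta> k * \<eta> k powr \<alpha> \<le> \<eta> k * (\<theta> / (1 + s))" using ek by (intro mult_left_mono) auto
        moreover have "\<eta> k powr (1 + \<alpha>) = \<eta> k * \<eta> k powr \<alpha>" using ek by (simp add: powr_add)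
        ultimately show ?thesis by simp
      qed
      have grow: "a \<tau> \<le> a j + (\<Sum>k\<in>{j..<\<tau>}. 2 * C * (\<eta> k * (\<theta> / (1 + s))))"
      proof (rule tele_a)
        fix k assume k: "j \<le> k" "k < \<tau>"
        have k1: "1 \<le> k" using k jN by simp
        have X1: "C * \<eta> k powr (1 + \<alpha>) * (1 + a k) \<le> C * \<eta> k powr (1 + \<alpha>) * 2"
          using win[OF k] e C by (intro mult_left_mono) auto
        have X2: "(2 * C) * \<eta> k powr (1 + \<alpha>) \<le> (2 * C) * (\<eta> k * (\<theta> / (1 + s)))"
          by (rule mult_left_mono[OF etapow[OF k(1)]]) (use C in simp)
        have X3: "C * \<eta> k powr (1 + \<alpha>) * 2 = (2 * C) * \<eta> k powr (1 + \<alpha>)" by simp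
        show "a (Suc k) \<le> a k + 2 * C * (\<eta> k * (\<theta> / (1 + s)))" using L2[OF k1] X1 X2 X3 by linarith
      qed (use jP in auto)
      define w where "w = W (Suc j) \<tau>"
      have w0: "0 \<le> w" unfolding w_def W_def using ep jN by (intro sum_nonneg) (auto intro: less_imp_le)
      have Wj: "W j \<tau> = \<eta> j + w" unfolding w_def W_def using jP by (simp add: sum.atLeast_Suc_lessThan)
      have iii: "\<epsilon> / 2 < 2 * C * (\<theta> / (1 + s)) * (\<eta> j + w)"
      proof -
        have "(\<Sum>k\<in>{j..<\<tau>}. 2 * C * (\<eta> k * (\<theta> / (1 + s)))) = (\<Sum>k\<in>{j..<\<tau>}. (2 * C * (\<theta> / (1 + s))) * \<eta> k)"
          by (rule sum.cong) (auto simp: mult_ac)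
        also have "\<dots> = 2 * C * (\<theta> / (1 + s)) * W j \<tau>"
          unfolding W_def by (rule sum_distrib_left[symmetric])
        finally have "(\<Sum>k\<in>{j..<\<tau>}. 2 * C * (\<eta> k * (\<theta> / (1 + s)))) = 2 * C * (\<theta> / (1 + s)) * W j \<tau>" .
        then show ?thesis using grow jP tau Wj by simp
      qed
      have i: "(\<epsilon> / 2) * w \<le> D0v + 2 * C * Sn \<tau>"
      proof -
        have "(\<epsilon> / 2) * w = (\<Sum>k\<in>{Suc j..<\<tau>}. (\<epsilon> / 2) * \<eta> k)" unfolding w_def W_def
          by (rule sum_distrib_left)
        also have "\<dots> \<le> (\<Sum>k\<in>{Suc j..<\<tau>}. \<eta> k * a k)"
        proof (rule sum_mono)
          fix k assume "k \<in> {Suc j..<\<tau>}"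
          then have k: "j < k" "k < \<tau>" by auto
          then have "\<eta> k * (\<epsilon> / 2) \<le> \<eta> k * a k"
            using jmax[OF k] ep[of k] jN by (intro mult_left_mono) auto
          then show "(\<epsilon> / 2) * \<eta> k \<le> \<eta> k * a k" by (simp add: mult.commute)
        qed
        also have "\<dots> \<le> D0v + 2 * C * Sn \<tau>" by (rule five) (use jN jP in auto)
        finally show ?thesis .
      qed
      have ii: "Sn \<tau> \<le> s + 1 + \<delta> * w"
      proof -
        have "Sn \<tau> = Sn (Suc j) + P (Suc j) \<tau>" by (rule Sn_split) (use jP in auto)
        also have "Sn (Suc j) = s + (\<eta> j)\<^sup>2" unfolding s_def Sn_def using jN by simp
        also have "P (Suc j) \<tau> \<le> \<delta> * w" unfolding w_def by (rule Pdel) (use N1 jN in auto)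
        also have "(\<eta> j)\<^sup>2 \<le> 1"
        proof -
          have "\<eta> j \<le> 1" using N1(2)[of j] jN d0 by simp
          moreover have "0 < \<eta> j" using ep jN by simp
          ultimately show ?thesis by (simp add: power_le_one)
        qed
        finally show ?thesis by simp
      qed
      have ew: "\<epsilon> * w \<le> 2 * D0v + 4 * C * Sn \<tau>" using i by (simp add: field_simps)
      have dw: "4 * C * (\<delta> * w) \<le> \<epsilon> * w / 2"
      proof -
        have "4 * C * \<delta> \<le> \<epsilon> / 2" using d8 by simp
        then show ?thesis using w0 by (metis mult.assoc mult_right_mono times_divide_eq_left)
      qed
      have S2: "Sn \<tau> \<le> 2 * s + 2 + D0v / (2 * C)"
      proof -
        have "4 * C * Sn \<tau> \<le> 4 * C * (s + 1 + \<delta> * w)" using ii C by simp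
        then have "4 * C * Sn \<tau> \<le> 4 * C * (s + 1) + \<epsilon> * w / 2" using dw by (simp add: algebra_simps)
        then have "4 * C * Sn \<tau> \<le> 4 * C * (s + 1) + D0v + 2 * C * Sn \<tau>" using ew by simp
        then have "2 * C * Sn \<tau> \<le> 4 * C * (s + 1) + D0v" by simp
        then show ?thesis using C by (simp add: field_simps)
      qed
      have ew2: "\<epsilon> * w \<le> 2 * (K0 * (1 + s)) - 2"
      proof -
        have "4 * C * Sn \<tau> \<le> 4 * C * (2 * s + 2 + D0v / (2 * C))" using S2 C by simp
        also have "\<dots> = 8 * C * s + 8 * C + 2 * D0v" using C by (simp add: field_simps)
        finally have "\<epsilon> * w \<le> 4 * D0v + 8 * C * s + 8 * C" using ew by simp
        moreover have "4 * C * s \<le> K0 * s" using K0(3) s0 by (simp add: mult_right_mono)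
        ultimately show ?thesis unfolding K0_def by (simp add: algebra_simps)
      qed
      have ej: "\<epsilon> * \<eta> j \<le> 1"
      proof -
        have "\<eta> j \<le> 1" using N1(2)[of j] jN d0 by simp
        moreover have "0 < \<eta> j" using ep jN by simp
        ultimately show ?thesis using e by (simp add: mult_le_one)
      qed
      have iv: "2 * K0 * (1 + s) < \<epsilon> * (\<eta> j + w)"
      proof -
        have pos: "0 < 1 + s" using s0 by simp
        have "\<epsilon> / 2 * (1 + s) < 2 * C * \<theta> * (\<eta> j + w)"
          using iii pos by (simp add: field_simps)
        also have "2 * C * \<theta> = \<epsilon>\<^sup>2 / (4 * K0)" unfolding \<theta>_def using C K0 by (simp add: field_simps)
        finally have "\<epsilon> / 2 * (1 + s) < \<epsilon>\<^sup>2 / (4 * K0) * (\<eta> j + w)" .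
        then have "2 * K0 * \<epsilon> * (1 + s) < \<epsilon>\<^sup>2 * (\<eta> j + w)" using K0 by (simp add: field_simps)
        then have "\<epsilon> * (2 * K0 * (1 + s)) < \<epsilon> * (\<epsilon> * (\<eta> j + w))" by (simp add: power2_eq_square mult_ac)
        then show ?thesis using e by simp
      qed
      show False using iv ew2 ej by (simp add: algebra_simps)
    qed
  qed
  show ?thesis
  proof (rule LIMSEQ_I)
    fix r :: real assume r: "0 < r"
    obtain N where N: "\<And>t. t \<ge> N \<Longrightarrow> a t \<le> min (r / 2) 1" using main[of "min (r/2) 1"] r by auto
    show "\<exists>no. \<forall>n\<ge>no. norm (a n - 0) < r"
    proof (intro exI[of _ "max N 1"] allI impI)
      fix n assume "max N 1 \<le> n"
      then show "norm (a n - 0) < r" using N[of n] a0[of n] r by auto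
    qed
  qed
qed


context ogdl
begin

definition Rk :: "(nat \<Rightarrow> 'x \<times> real) \<Rightarrow> nat \<Rightarrow> real" where
  "Rk \<omega> t = (\<integral>z. phi (snd z) (fv \<omega> t (fst z)) \<partial>rho)"
definition Es :: real where "Es = (\<integral>z. phi (snd z) (fh (fst z)) \<partial>rho)"
definition Aa :: "nat \<Rightarrow> real" where "Aa t = (\<integral>\<omega>. Rk \<omega> t \<partial>PM UNIV)"
definition Nm :: "(nat \<Rightarrow> 'x \<times> real) \<Rightarrow> nat \<Rightarrow> real" where "Nm \<omega> t = (norm (F \<omega> t - fH))\<^sup>2"
definition Dd :: "nat \<Rightarrow> real" where "Dd t = (\<integral>\<omega>. Nm \<omega> t \<partial>PM UNIV)"
definition PB :: "nat \<Rightarrow> real" where "PB t = B + L + G1 * (Mb t * \<kappa>) + L * (Mb t * \<kappa>)\<^sup>2"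
definition Gb :: "nat \<Rightarrow> real" where "Gb t = G1 + L * (Mb t * \<kappa>)"

lemma good_PM: "\<omega> \<in> space (PM I) \<Longrightarrow> {..<t} \<subseteq> I \<Longrightarrow> k < t \<Longrightarrow> \<omega> k \<in> X \<times> Y"
  using space_PM by auto

lemma fvb: "(\<And>k. k < t \<Longrightarrow> \<omega> k \<in> X \<times> Y) \<Longrightarrow> x \<in> X \<Longrightarrow> \<bar>fv \<omega> t x\<bar> \<le> Mb t * \<kappa>"
  using fv_bound_F[of x "F \<omega> t"] mult_right_mono[OF F_bound[of t \<omega>] kappa_nonneg] unfolding fv_def by force

lemma phib:
  assumes g: "\<And>k. k < t \<Longrightarrow> \<omega> k \<in> X \<times> Y" and z: "z \<in> X \<times> Y"
  shows "0 \<le> phi (snd z) (fv \<omega> t (fst z))" "phi (snd z) (fv \<omega> t (fst z)) \<le> PB t"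
proof -
  have y: "snd z \<in> Y" and x: "fst z \<in> X" using z by (auto simp: mem_Times_iff)
  show "0 \<le> phi (snd z) (fv \<omega> t (fst z))" using phi_nonneg[OF y] .
  let ?s = "fv \<omega> t (fst z)"
  have sb: "\<bar>?s\<bar> \<le> Mb t * \<kappa>" by (rule fvb[OF g x])
  have "G1 * \<bar>?s\<bar> \<le> G1 * (Mb t * \<kappa>)" using sb G1_pos by (intro mult_left_mono) auto
  moreover have "?s\<^sup>2 \<le> (Mb t * \<kappa>)\<^sup>2"
    using sb by (metis abs_le_square_iff abs_of_nonneg mult_nonneg_nonneg Mb_nonneg kappa_nonneg)
  then have "L * ?s\<^sup>2 \<le> L * (Mb t * \<kappa>)\<^sup>2" using L_pos by (intro mult_left_mono) auto
  ultimately show "phi (snd z) ?s \<le> PB t" using phi_bound[OF y, of ?s] unfolding PB_def by linarith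
qed

lemma dphib:
  assumes g: "\<And>k. k < t \<Longrightarrow> \<omega> k \<in> X \<times> Y" and z: "z \<in> X \<times> Y"
  shows "\<bar>dphi (snd z) (fv \<omega> t (fst z))\<bar> \<le> Gb t"
proof -
  have y: "snd z \<in> Y" and x: "fst z \<in> X" using z by (auto simp: mem_Times_iff)
  have "L * \<bar>fv \<omega> t (fst z)\<bar> \<le> L * (Mb t * \<kappa>)" using fvb[OF g x] L_pos by (intro mult_left_mono) auto
  then show ?thesis using dphi_bound[OF y, of "fv \<omega> t (fst z)"] unfolding Gb_def by linarith
qed

lemma Gb_nonneg: "0 \<le> Gb t" unfolding Gb_def using G1_pos L_pos Mb_nonneg kappa_nonneg by simp

lemma fhb: "x \<in> X \<Longrightarrow> \<bar>fh x\<bar> \<le> norm fH * \<kappa>"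
  unfolding fh_def by (rule fv_bound_F)

lemma LJ: "{..<t} \<subseteq> I \<Longrightarrow> (\<lambda>w. phi (snd (snd w)) (fv (fst w) t (fst (snd w)))) \<in> borel_measurable (PM I \<Otimes>\<^sub>M rho)"
proof -
  assume a: "{..<t} \<subseteq> I"
  have "(\<lambda>w. (\<lambda>w. phi (snd (fst w)) (snd w)) (snd w, fv (fst w) t (fst (snd w)))) \<in> borel_measurable (PM I \<Otimes>\<^sub>M rho)"
    by (rule measurable_compose[OF measurable_Pair[OF measurable_snd fv_meas_all[OF a]] PH_meas])
  then show ?thesis by simp
qed

lemma DJ: "{..<t} \<subseteq> I \<Longrightarrow> (\<lambda>w. dphi (snd (snd w)) (fv (fst w) t (fst (snd w)))) \<in> borel_measurable (PM I \<Otimes>\<^sub>M rho)"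
proof -
  assume a: "{..<t} \<subseteq> I"
  have "(\<lambda>w. (\<lambda>w. dphi (snd (fst w)) (snd w)) (snd w, fv (fst w) t (fst (snd w)))) \<in> borel_measurable (PM I \<Otimes>\<^sub>M rho)"
    by (rule measurable_compose[OF measurable_Pair[OF measurable_snd fv_meas_all[OF a]] DP_meas])
  then show ?thesis by simp
qed

lemma Rk_meas: "{..<t} \<subseteq> I \<Longrightarrow> (\<lambda>\<omega>. Rk \<omega> t) \<in> borel_measurable (PM I)"
  unfolding Rk_def using LJ
  by (intro sigma_finite_measure.borel_measurable_lebesgue_integral[OF prob_space_imp_sigma_finite[OF rho_prob]])
     (simp add: case_prod_beta')

lemma phi_fv_meas: "\<omega> \<in> space (PM I) \<Longrightarrow> {..<t} \<subseteq> I \<Longrightarrow> (\<lambda>z. phi (snd z) (fv \<omega> t (fst z))) \<in> borel_measurable rho"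
  using measurable_Pair2[OF LJ] by simp

lemma Rkb: assumes "\<omega> \<in> space (PM I)" "{..<t} \<subseteq> I" shows "0 \<le> Rk \<omega> t" "Rk \<omega> t \<le> PB t"
proof -
  interpret R: prob_space rho by (rule rho_prob)
  have g: "\<And>k. k < t \<Longrightarrow> \<omega> k \<in> X \<times> Y" using good_PM[OF assms] .
  have i: "integrable rho (\<lambda>z. phi (snd z) (fv \<omega> t (fst z)))"
    by (rule R.integrable_const_bound[where B="PB t"]) (use phib[OF g] phi_fv_meas[OF assms] in \<open>auto simp: space_rho\<close>)
  show "0 \<le> Rk \<omega> t" unfolding Rk_def by (rule integral_nonneg_AE) (use phib[OF g] in \<open>auto simp: space_rho\<close>)
  show "Rk \<omega> t \<le> PB t" unfolding Rk_def
    by (rule R.integral_le_const[OF i]) (use phib[OF g] in \<open>auto simp: space_rho\<close>)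
qed

lemma phiH_meas: "(\<lambda>z. phi (snd z) (fh (fst z))) \<in> borel_measurable rho"
proof -
  have "(\<lambda>z. (\<lambda>w. phi (snd (fst w)) (snd w)) (z, fh (fst z))) \<in> borel_measurable rho"
    by (rule measurable_compose[OF measurable_Pair[OF measurable_ident_sets[OF refl] fh_meas] PH_meas])
  then show ?thesis by simp
qed

lemma phiHb: "z \<in> space rho \<Longrightarrow> 0 \<le> phi (snd z) (fh (fst z)) \<and> phi (snd z) (fh (fst z)) \<le> B"
  using BH phi_nonneg by (auto simp: space_rho mem_Times_iff fh_def eval_h_def)

lemma Es_bounds: "0 \<le> Es" "Es \<le> B"
proof -
  interpret R: prob_space rho by (rule rho_prob)
  have i: "integrable rho (\<lambda>z. phi (snd z) (fh (fst z)))"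
    by (rule R.integrable_const_bound[where B=B]) (use phiHb phiH_meas in auto)
  show "0 \<le> Es" unfolding Es_def by (rule integral_nonneg_AE) (use phiHb in auto)
  show "Es \<le> B" unfolding Es_def by (rule R.integral_le_const[OF i]) (use phiHb in auto)
qed

lemma gen_err_F: assumes "\<omega> \<in> space (PM UNIV)"
  shows "gen_err rho phi (eval_h Phi (F \<omega> t)) = ennreal (Rk \<omega> t)"
proof -
  interpret R: prob_space rho by (rule rho_prob)
  have g: "\<And>k. k < t \<Longrightarrow> \<omega> k \<in> X \<times> Y" using good_PM[OF assms] by auto
  have i: "integrable rho (\<lambda>z. phi (snd z) (fv \<omega> t (fst z)))"
    by (rule R.integrable_const_bound[where B="PB t"]) (use phib[OF g] phi_fv_meas[OF assms] in \<open>auto simp: space_rho\<close>)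
  have "gen_err rho phi (eval_h Phi (F \<omega> t)) = (\<integral>\<^sup>+z. ennreal (phi (snd z) (fv \<omega> t (fst z))) \<partial>rho)"
    unfolding gen_err_def eval_h_def fv_def ..
  also have "\<dots> = ennreal (Rk \<omega> t)" unfolding Rk_def
    by (rule nn_integral_eq_integral[OF i]) (use phib[OF g] in \<open>auto simp: space_rho\<close>)
  finally show ?thesis .
qed

lemma gen_err_H: "gen_err rho phi (eval_h Phi fH) = ennreal Es"
proof -
  interpret R: prob_space rho by (rule rho_prob)
  have i: "integrable rho (\<lambda>z. phi (snd z) (fh (fst z)))"
    by (rule R.integrable_const_bound[where B=B]) (use phiHb phiH_meas in auto)
  have "gen_err rho phi (eval_h Phi fH) = (\<integral>\<^sup>+z. ennreal (phi (snd z) (fh (fst z))) \<partial>rho)"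
    unfolding gen_err_def eval_h_def fh_def ..
  also have "\<dots> = ennreal Es" unfolding Es_def
    by (rule nn_integral_eq_integral[OF i]) (use phiHb in auto)
  finally show ?thesis .
qed

lemma Es_le_Rk: "\<omega> \<in> space (PM UNIV) \<Longrightarrow> Es \<le> Rk \<omega> t"
  using fH_min[of "F \<omega> t"] gen_err_F[of \<omega> t] gen_err_H Rkb[of \<omega> UNIV t] Es_bounds
  by (simp add: ennreal_le_iff)

end


context ogdl
begin

lemma PMU_prob: "prob_space (PM UNIV)" by (rule prob_space_PiM) (simp add: rho_prob)

lemma Rk_int: "integrable (PM UNIV) (\<lambda>\<omega>. Rk \<omega> t)"
proof -
  interpret P: prob_space "PM UNIV" by (rule PMU_prob)
  show ?thesis
    by (rule P.integrable_const_bound[where B="PB t"]) (use Rkb[of _ UNIV t] Rk_meas[of t UNIV] in auto)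
qed

lemma EA: "(\<integral>\<omega>. phi (snd (\<omega> t)) (fv \<omega> t (fst (\<omega> t))) \<partial>PM UNIV) = Aa t"
proof -
  have "(\<integral>\<omega>. (\<lambda>w. phi (snd (snd w)) (fv (fst w) t (fst (snd w)))) (\<omega>, \<omega> t) \<partial>PM UNIV)
      = (\<integral>\<omega>. (\<integral>z. (\<lambda>w. phi (snd (snd w)) (fv (fst w) t (fst (snd w)))) (\<omega>, z) \<partial>rho) \<partial>PM UNIV)"
  proof (rule T2[where C="PB t"])
    show "(\<lambda>w. phi (snd (snd w)) (fv (fst w) t (fst (snd w)))) \<in> borel_measurable (PM (UNIV - {t}) \<Otimes>\<^sub>M rho)"
      by (rule LJ) auto
    show "(\<lambda>w. phi (snd (snd w)) (fv (fst w) t (fst (snd w)))) \<in> borel_measurable (PM UNIV \<Otimes>\<^sub>M rho)"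
      by (rule LJ) auto
  next
    fix \<omega> :: "nat \<Rightarrow> 'x \<times> real" and z assume a: "\<And>k. k \<noteq> t \<Longrightarrow> \<omega> k \<in> space rho" "z \<in> space rho"
    have g: "\<And>k. k < t \<Longrightarrow> \<omega> k \<in> X \<times> Y" using a(1) space_rho by auto
    show "\<bar>(\<lambda>w. phi (snd (snd w)) (fv (fst w) t (fst (snd w)))) (\<omega>, z)\<bar> \<le> PB t"
      using phib[OF g, where z=z] a(2) space_rho by auto
  next
    fix \<omega> :: "nat \<Rightarrow> 'x \<times> real" and x z
    show "(\<lambda>w. phi (snd (snd w)) (fv (fst w) t (fst (snd w)))) (fun_upd \<omega> t x, z) = (\<lambda>w. phi (snd (snd w)) (fv (fst w) t (fst (snd w)))) (\<omega>, z)"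
      using fv_upd[of t t \<omega> x] by simp
  qed
  then show ?thesis by (simp add: Aa_def Rk_def)
qed

lemma EH: "(\<integral>\<omega>. phi (snd (\<omega> t)) (fh (fst (\<omega> t))) \<partial>PM UNIV) = Es"
  unfolding Es_def by (rule T1[OF phiH_meas, where C=B]) (use phiHb in auto)

lemma Nm_rec:
  assumes t: "1 \<le> t" and x: "fst (\<omega> t) \<in> X"
  shows "Nm \<omega> (Suc t) = Nm \<omega> t - 2 * (eta t * gr \<omega> t) * (fv \<omega> t (fst (\<omega> t)) - fh (fst (\<omega> t)))
     + (eta t * gr \<omega> t)\<^sup>2 * K (fst (\<omega> t)) (fst (\<omega> t))"
proof -
  define u where "u = F \<omega> t - fH"
  define c where "c = eta t * gr \<omega> t"
  define v where "v = Phi (fst (\<omega> t))"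
  have "F \<omega> (Suc t) - fH = u - c *\<^sub>R v" unfolding u_def c_def v_def using t by (simp add: F_Suc)
  then have "Nm \<omega> (Suc t) = inner (u - c *\<^sub>R v) (u - c *\<^sub>R v)" by (simp add: Nm_def power2_norm_eq_inner)
  also have "\<dots> = inner u u - 2 * c * inner u v + c\<^sup>2 * inner v v"
    by (simp add: inner_diff_left inner_diff_right inner_commute power2_eq_square algebra_simps)
  also have "inner u u = Nm \<omega> t" unfolding u_def Nm_def by (simp add: power2_norm_eq_inner)
  also have "inner u v = fv \<omega> t (fst (\<omega> t)) - fh (fst (\<omega> t))" unfolding u_def v_def fv_def fh_def
    by (simp add: inner_diff_left)
  also have "inner v v = K (fst (\<omega> t)) (fst (\<omega> t))" unfolding v_def using K_feature[OF x x] by simp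
  finally show ?thesis unfolding c_def .
qed

lemma Nm_meas: "(\<lambda>\<omega>. Nm \<omega> t) \<in> borel_measurable (PM UNIV)"
proof (induction t)
  case 0 then show ?case by (simp add: Nm_def)
next
  case (Suc t)
  show ?case
  proof (cases "t = 0")
    case True then show ?thesis by (simp add: Nm_def)
  next
    case False
    have fx: "(\<lambda>\<omega>. fv \<omega> t (fst (\<omega> t))) \<in> borel_measurable (PM UNIV)" by (rule fvx_meas) auto
    have g: "(\<lambda>\<omega>. gr \<omega> t) \<in> borel_measurable (PM UNIV)" by (rule gr_meas) auto
    have h: "(\<lambda>\<omega>. fh (fst (\<omega> t))) \<in> borel_measurable (PM UNIV)"
      by (rule measurable_compose[OF comp_x fh_meas]) simp
    have k: "(\<lambda>\<omega>. K (fst (\<omega> t)) (fst (\<omega> t))) \<in> borel_measurable (PM UNIV)"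
    proof -
      have "(\<lambda>\<omega>. (\<lambda>w. K (fst (fst w)) (fst (snd w))) (\<omega> t, \<omega> t)) \<in> borel_measurable (PM UNIV)"
        by (rule measurable_compose[OF measurable_Pair[OF comp_x comp_x] KK_meas]) auto
      then show ?thesis by simp
    qed
    have "(\<lambda>\<omega>. Nm \<omega> t - 2 * (eta t * gr \<omega> t) * (fv \<omega> t (fst (\<omega> t)) - fh (fst (\<omega> t)))
     + (eta t * gr \<omega> t)\<^sup>2 * K (fst (\<omega> t)) (fst (\<omega> t))) \<in> borel_measurable (PM UNIV)"
      using Suc.IH fx g h k by measurable
    then show ?thesis
    proof (rule measurable_cong[THEN iffD1, rotated])
      fix \<omega> assume "\<omega> \<in> space (PM UNIV)"
      then have "fst (\<omega> t) \<in> X" using space_PM[of \<omega> UNIV t] by (auto simp: mem_Times_iff)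
      then show "Nm \<omega> t - 2 * (eta t * gr \<omega> t) * (fv \<omega> t (fst (\<omega> t)) - fh (fst (\<omega> t)))
     + (eta t * gr \<omega> t)\<^sup>2 * K (fst (\<omega> t)) (fst (\<omega> t)) = Nm \<omega> (Suc t)"
        using Nm_rec[of t \<omega>] False by simp
    qed
  qed
qed

lemma Nm_bound: "\<omega> \<in> space (PM UNIV) \<Longrightarrow> 0 \<le> Nm \<omega> t \<and> Nm \<omega> t \<le> (Mb t + norm fH)\<^sup>2"
proof -
  assume w: "\<omega> \<in> space (PM UNIV)"
  have "norm (F \<omega> t - fH) \<le> norm (F \<omega> t) + norm fH" by (rule norm_triangle_ineq4)
  also have "\<dots> \<le> Mb t + norm fH" using F_bound[of t \<omega>] good_PM[OF w, of t] by simp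
  finally show ?thesis unfolding Nm_def by (simp add: power_mono)
qed

lemma Nm_int: "integrable (PM UNIV) (\<lambda>\<omega>. Nm \<omega> t)"
proof -
  interpret P: prob_space "PM UNIV" by (rule PMU_prob)
  show ?thesis
    by (rule P.integrable_const_bound[where B="(Mb t + norm fH)\<^sup>2"]) (use Nm_bound Nm_meas in auto)
qed

end


context ogdl
begin

lemma K_le: "x \<in> X \<Longrightarrow> K x x \<le> \<kappa>\<^sup>2"
  using K_bound[of x x] by simp

lemma f1_meas: "(\<lambda>\<omega>. phi (snd (\<omega> t)) (fv \<omega> t (fst (\<omega> t)))) \<in> borel_measurable (PM UNIV)"
proof -
  have "(\<lambda>\<omega>. (\<lambda>w. phi (snd (snd w)) (fv (fst w) t (fst (snd w)))) (\<omega>, \<omega> t)) \<in> borel_measurable (PM UNIV)"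
    by (rule measurable_compose[OF measurable_Pair[OF measurable_ident_sets[OF refl] comp_x] LJ]) auto
  then show ?thesis by simp
qed

lemma f1_int: "integrable (PM UNIV) (\<lambda>\<omega>. phi (snd (\<omega> t)) (fv \<omega> t (fst (\<omega> t))))"
proof -
  interpret P: prob_space "PM UNIV" by (rule PMU_prob)
  show ?thesis
  proof (rule P.integrable_const_bound[where B="PB t"])
    show "AE \<omega> in PM UNIV. norm (phi (snd (\<omega> t)) (fv \<omega> t (fst (\<omega> t)))) \<le> PB t"
    proof (rule AE_I2)
      fix \<omega> assume w: "\<omega> \<in> space (PM UNIV)"
      have g: "\<And>k. k < t \<Longrightarrow> \<omega> k \<in> X \<times> Y" using good_PM[OF w] by auto
      show "norm (phi (snd (\<omega> t)) (fv \<omega> t (fst (\<omega> t)))) \<le> PB t"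
        using phib[OF g, where z="\<omega> t"] space_PM[OF w] by auto
    qed
  qed (rule f1_meas)
qed

lemma f2_meas: "(\<lambda>\<omega>. phi (snd (\<omega> t)) (fh (fst (\<omega> t)))) \<in> borel_measurable (PM UNIV)"
  by (rule measurable_compose[OF comp_x phiH_meas]) simp

lemma f2_int: "integrable (PM UNIV) (\<lambda>\<omega>. phi (snd (\<omega> t)) (fh (fst (\<omega> t))))"
proof -
  interpret P: prob_space "PM UNIV" by (rule PMU_prob)
  show ?thesis
  proof (rule P.integrable_const_bound[where B=B])
    show "AE \<omega> in PM UNIV. norm (phi (snd (\<omega> t)) (fh (fst (\<omega> t)))) \<le> B"
      by (rule AE_I2) (use phiHb space_PM[of _ UNIV t] space_rho in auto)
  qed (rule f2_meas)
qed

lemma L1_pt: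
  assumes w: "\<omega> \<in> space (PM UNIV)" and t: "1 \<le> t"
  shows "Nm \<omega> (Suc t) \<le> Nm \<omega> t - 2 * eta t * (phi (snd (\<omega> t)) (fv \<omega> t (fst (\<omega> t))) - phi (snd (\<omega> t)) (fh (fst (\<omega> t))))
     + (eta t)\<^sup>2 * \<kappa>\<^sup>2 * (1 + C0 * phi (snd (\<omega> t)) (fv \<omega> t (fst (\<omega> t))))"
proof -
  have xy: "fst (\<omega> t) \<in> X" "snd (\<omega> t) \<in> Y" using space_PM[OF w, of t] by (auto simp: mem_Times_iff)
  define s where "s = fv \<omega> t (fst (\<omega> t))"
  define s' where "s' = fh (fst (\<omega> t))"
  define y where "y = snd (\<omega> t)"
  define g where "g = gr \<omega> t"
  have gdef: "g = dphi y s" unfolding g_def gr_def y_def s_def ..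
  have y: "y \<in> Y" using xy(2) unfolding y_def .
  have e: "0 < eta t" using eta_pos[OF t] .
  have tan: "phi y s - phi y s' \<le> g * (s - s')"
    using tangent[OF y, of s s'] unfolding gdef by (simp add: algebra_simps)
  have A: "2 * eta t * (phi y s - phi y s') \<le> 2 * (eta t * g) * (s - s')"
    using mult_left_mono[OF tan, of "2 * eta t"] e by (simp add: mult_ac)
  have Kx: "0 \<le> K (fst (\<omega> t)) (fst (\<omega> t))" "K (fst (\<omega> t)) (fst (\<omega> t)) \<le> \<kappa>\<^sup>2"
    using K_eq[OF xy(1)] K_le[OF xy(1)] by auto
  have g2: "g\<^sup>2 \<le> 1 + C0 * phi y s" unfolding gdef by (rule selfb2[OF y])
  have B0: "g\<^sup>2 * K (fst (\<omega> t)) (fst (\<omega> t)) \<le> (1 + C0 * phi y s) * \<kappa>\<^sup>2"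
    by (rule mult_mono[OF g2 Kx(2)]) (use Kx C0_pos phi_nonneg[OF y, of s] in auto)
  have B: "(eta t * g)\<^sup>2 * K (fst (\<omega> t)) (fst (\<omega> t)) \<le> (eta t)\<^sup>2 * \<kappa>\<^sup>2 * (1 + C0 * phi y s)"
  proof -
    have "(eta t * g)\<^sup>2 * K (fst (\<omega> t)) (fst (\<omega> t)) = (eta t)\<^sup>2 * (g\<^sup>2 * K (fst (\<omega> t)) (fst (\<omega> t)))"
      by (simp add: power_mult_distrib)
    also have "\<dots> \<le> (eta t)\<^sup>2 * ((1 + C0 * phi y s) * \<kappa>\<^sup>2)" by (rule mult_left_mono[OF B0]) simp
    finally show ?thesis by (simp add: mult_ac)
  qed
  show ?thesis using Nm_rec[of t \<omega>, OF t xy(1)] A B unfolding s_def[symmetric] s'_def[symmetric] y_def[symmetric] g_def[symmetric]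
    by linarith
qed

lemma L1:
  assumes t: "1 \<le> t"
  shows "Dd (Suc t) \<le> Dd t - 2 * eta t * (Aa t - Es) + (eta t)\<^sup>2 * \<kappa>\<^sup>2 * (1 + C0 * Aa t)"
proof -
  interpret P: prob_space "PM UNIV" by (rule PMU_prob)
  let ?f1 = "\<lambda>\<omega>. phi (snd (\<omega> t)) (fv \<omega> t (fst (\<omega> t)))"
  let ?f2 = "\<lambda>\<omega>. phi (snd (\<omega> t)) (fh (fst (\<omega> t)))"
  have "Dd (Suc t) \<le> (\<integral>\<omega>. Nm \<omega> t - 2 * eta t * (?f1 \<omega> - ?f2 \<omega>) + (eta t)\<^sup>2 * \<kappa>\<^sup>2 * (1 + C0 * ?f1 \<omega>) \<partial>PM UNIV)"
    unfolding Dd_def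
    by (rule integral_mono[OF Nm_int _ L1_pt[OF _ t]]) (use Nm_int f1_int f2_int in simp_all)
  also have "\<dots> = Dd t - 2 * eta t * (Aa t - Es) + (eta t)\<^sup>2 * \<kappa>\<^sup>2 * (1 + C0 * Aa t)"
    using Nm_int f1_int f2_int EA[of t] EH[of t]
    by (simp add: Dd_def algebra_simps P.prob_space)
  finally show ?thesis .
qed

end


context ogdl
begin

definition Psi :: "(nat \<Rightarrow> 'x \<times> real) \<Rightarrow> nat \<Rightarrow> 'x \<Rightarrow> real" where
  "Psi \<omega> t x' = (\<integral>z. dphi (snd z) (fv \<omega> t (fst z)) * K x' (fst z) \<partial>rho)"

lemma PsiJ: "{..<t} \<subseteq> I \<Longrightarrow> (\<lambda>w. Psi (fst w) t (fst (snd w))) \<in> borel_measurable (PM I \<Otimes>\<^sub>M rho)"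
proof -
  assume a: "{..<t} \<subseteq> I"
  let ?g = "\<lambda>u::((nat \<Rightarrow> 'x \<times> real) \<times> ('x \<times> real)) \<times> ('x \<times> real).
     dphi (snd (snd u)) (fv (fst (fst u)) t (fst (snd u))) * K (fst (snd (fst u))) (fst (snd u))"
  have m1: "(\<lambda>u. (\<lambda>w. dphi (snd (snd w)) (fv (fst w) t (fst (snd w)))) (fst (fst u), snd u))
      \<in> borel_measurable ((PM I \<Otimes>\<^sub>M rho) \<Otimes>\<^sub>M rho)"
    by (rule measurable_compose[OF measurable_Pair[OF measurable_compose[OF measurable_fst measurable_fst] measurable_snd] DJ[OF a]])
  have m2: "(\<lambda>u. (\<lambda>w. K (fst (fst w)) (fst (snd w))) (snd (fst u), snd u)) \<in> borel_measurable ((PM I \<Otimes>\<^sub>M rho) \<Otimes>\<^sub>M rho)"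
    by (rule measurable_compose[OF measurable_Pair[OF measurable_compose[OF measurable_fst measurable_snd] measurable_snd] KK_meas])
  have "?g \<in> borel_measurable ((PM I \<Otimes>\<^sub>M rho) \<Otimes>\<^sub>M rho)"
    using m1 m2 by (intro borel_measurable_times) auto
  then have "(\<lambda>w. \<integral>z. ?g (w, z) \<partial>rho) \<in> borel_measurable (PM I \<Otimes>\<^sub>M rho)"
    by (intro sigma_finite_measure.borel_measurable_lebesgue_integral[OF prob_space_imp_sigma_finite[OF rho_prob]])
       (simp add: case_prod_beta')
  then show ?thesis by (simp add: Psi_def)
qed

lemma Kx_meas: "x' \<in> X \<Longrightarrow> (\<lambda>z. K x' (fst z)) \<in> borel_measurable rho"
proof (rule meas_cont_rho)
  assume x: "x' \<in> X"
  have "continuous_on (X \<times> Y) ((\<lambda>(x, x'). K x x') \<circ> (\<lambda>z. (x', fst z)))"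
    by (rule continuous_on_compose[OF _ continuous_on_subset[OF K_cont]]) (use x in \<open>auto intro!: continuous_intros\<close>)
  then show "continuous_on (X \<times> Y) (\<lambda>z. K x' (fst z))" by (simp add: comp_def)
qed

lemma dK_meas: "\<omega> \<in> space (PM I) \<Longrightarrow> {..<t} \<subseteq> I \<Longrightarrow> x' \<in> X \<Longrightarrow>
  (\<lambda>z. dphi (snd z) (fv \<omega> t (fst z)) * K x' (fst z)) \<in> borel_measurable rho"
  using measurable_Pair2[OF DJ] Kx_meas by (intro borel_measurable_times) auto

lemma dK_bound: "(\<And>k. k < t \<Longrightarrow> \<omega> k \<in> X \<times> Y) \<Longrightarrow> x' \<in> X \<Longrightarrow> z \<in> space rho \<Longrightarrow>
  \<bar>dphi (snd z) (fv \<omega> t (fst z)) * K x' (fst z)\<bar> \<le> Gb t * \<kappa>\<^sup>2"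
proof -
  assume g: "\<And>k. k < t \<Longrightarrow> \<omega> k \<in> X \<times> Y" and x: "x' \<in> X" and z: "z \<in> space rho"
  have "\<bar>dphi (snd z) (fv \<omega> t (fst z))\<bar> \<le> Gb t" using dphib[OF g] z space_rho by auto
  moreover have "\<bar>K x' (fst z)\<bar> \<le> \<kappa>\<^sup>2" using K_bound x z space_rho by (auto simp: mem_Times_iff)
  ultimately show ?thesis by (simp add: abs_mult mult_mono' Gb_nonneg del: power2_abs)
qed

lemma Psib: "\<omega> \<in> space (PM I) \<Longrightarrow> {..<t} \<subseteq> I \<Longrightarrow> x' \<in> X \<Longrightarrow> \<bar>Psi \<omega> t x'\<bar> \<le> Gb t * \<kappa>\<^sup>2"
proof -
  assume a: "\<omega> \<in> space (PM I)" "{..<t} \<subseteq> I" "x' \<in> X"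
  interpret R: prob_space rho by (rule rho_prob)
  show ?thesis unfolding Psi_def
    by (rule R.abs_integral_le[OF dK_meas[OF a]]) (rule dK_bound[OF good_PM[OF a(1,2)] a(3)])
qed

lemma L2_pt:
  assumes w: "\<omega> \<in> space (PM UNIV)" and t: "1 \<le> t"
  shows "Rk \<omega> (Suc t) \<le> Rk \<omega> t - eta t * gr \<omega> t * Psi \<omega> t (fst (\<omega> t))
     + L * (eta t powr (1 + \<alpha>) * ((\<kappa>\<^sup>2) powr (1 + \<alpha>) * (1 + C0 * phi (snd (\<omega> t)) (fv \<omega> t (fst (\<omega> t))))))"
proof -
  interpret R: prob_space rho by (rule rho_prob)
  have xy: "fst (\<omega> t) \<in> X" "snd (\<omega> t) \<in> Y" using space_PM[OF w, of t] by (auto simp: mem_Times_iff)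
  have g: "\<And>k. k < t \<Longrightarrow> \<omega> k \<in> X \<times> Y" using good_PM[OF w] by auto
  have g': "\<And>k. k < Suc t \<Longrightarrow> \<omega> k \<in> X \<times> Y" using good_PM[OF w] by auto
  define xt where "xt = fst (\<omega> t)"
  define c where "c = eta t * gr \<omega> t"
  define p where "p = 1 + \<alpha>"
  have p0: "0 \<le> p" unfolding p_def using alpha by simp
  let ?G = "\<lambda>z. phi (snd z) (fv \<omega> t (fst z)) - c * (dphi (snd z) (fv \<omega> t (fst z)) * K xt (fst z)) + L * (\<bar>c\<bar> * \<kappa>\<^sup>2) powr p"
  have pt: "phi (snd z) (fv \<omega> (Suc t) (fst z)) \<le> ?G z" if z: "z \<in> space rho" for z
  proof -
    have y: "snd z \<in> Y" and x: "fst z \<in> X" using z space_rho by (auto simp: mem_Times_iff)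
    have fs: "fv \<omega> (Suc t) (fst z) = fv \<omega> t (fst z) - c * K xt (fst z)"
      unfolding c_def xt_def using fv_Suc[of t \<omega>, OF t xy(1) x] by simp
    have d: "phi (snd z) (fv \<omega> t (fst z) - c * K xt (fst z)) \<le> phi (snd z) (fv \<omega> t (fst z))
       + dphi (snd z) (fv \<omega> t (fst z)) * ((fv \<omega> t (fst z) - c * K xt (fst z)) - fv \<omega> t (fst z))
       + L * \<bar>(fv \<omega> t (fst z) - c * K xt (fst z)) - fv \<omega> t (fst z)\<bar> powr (1 + \<alpha>)"
      by (rule descent[OF y])
    have ab: "\<bar>(fv \<omega> t (fst z) - c * K xt (fst z)) - fv \<omega> t (fst z)\<bar> \<le> \<bar>c\<bar> * \<kappa>\<^sup>2"
    proof -
      have "\<bar>K xt (fst z)\<bar> \<le> \<kappa>\<^sup>2" using K_bound xy(1) x unfolding xt_def by auto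
      then show ?thesis by (simp add: abs_mult mult_left_mono del: power2_abs)
    qed
    have "\<bar>(fv \<omega> t (fst z) - c * K xt (fst z)) - fv \<omega> t (fst z)\<bar> powr p \<le> (\<bar>c\<bar> * \<kappa>\<^sup>2) powr p"
      by (rule powr_mono2[OF p0 _ ab]) simp
    then have "L * \<bar>(fv \<omega> t (fst z) - c * K xt (fst z)) - fv \<omega> t (fst z)\<bar> powr p \<le> L * (\<bar>c\<bar> * \<kappa>\<^sup>2) powr p"
      using L_pos by (intro mult_left_mono) auto
    then show ?thesis using d unfolding fs p_def by (simp add: algebra_simps)
  qed
  have i1: "integrable rho (\<lambda>z. phi (snd z) (fv \<omega> t (fst z)))"
    by (rule R.integrable_const_bound[where B="PB t"]) (use phib[OF g] phi_fv_meas[OF w] in \<open>auto simp: space_rho\<close>)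
  have i1': "integrable rho (\<lambda>z. phi (snd z) (fv \<omega> (Suc t) (fst z)))"
    by (rule R.integrable_const_bound[where B="PB (Suc t)"]) (use phib[OF g'] phi_fv_meas[OF w] in \<open>auto simp: space_rho\<close>)
  have i2: "integrable rho (\<lambda>z. dphi (snd z) (fv \<omega> t (fst z)) * K xt (fst z))"
  proof (rule R.integrable_const_bound[where B="Gb t * \<kappa>\<^sup>2"])
    show "AE z in rho. norm (dphi (snd z) (fv \<omega> t (fst z)) * K xt (fst z)) \<le> Gb t * \<kappa>\<^sup>2"
      by (rule AE_I2) (use dK_bound[of t \<omega>, OF g xy(1)] in \<open>simp add: xt_def\<close>)
    show "(\<lambda>z. dphi (snd z) (fv \<omega> t (fst z)) * K xt (fst z)) \<in> borel_measurable rho"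
      unfolding xt_def by (rule dK_meas[OF w _ xy(1)]) simp
  qed
  have A0: "Rk \<omega> (Suc t) \<le> (\<integral>z. ?G z \<partial>rho)" unfolding Rk_def
    by (rule integral_mono[OF i1']) (use i1 i2 pt in auto)
  have A1: "(\<integral>z. ?G z \<partial>rho) = Rk \<omega> t - c * Psi \<omega> t xt + L * (\<bar>c\<bar> * \<kappa>\<^sup>2) powr p"
    using i1 i2 by (simp add: Rk_def Psi_def R.prob_space)
  have A2: "(\<bar>c\<bar> * \<kappa>\<^sup>2) powr p \<le> eta t powr p * ((\<kappa>\<^sup>2) powr p * (1 + C0 * phi (snd (\<omega> t)) (fv \<omega> t (fst (\<omega> t)))))"
  proof -
    have e: "0 < eta t" using eta_pos[OF t] .
    have q1: "(\<bar>c\<bar> * \<kappa>\<^sup>2) powr p = eta t powr p * ((\<kappa>\<^sup>2) powr p * \<bar>gr \<omega> t\<bar> powr p)"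
      unfolding c_def using e by (simp add: abs_mult powr_mult mult_ac)
    have q2: "\<bar>gr \<omega> t\<bar> powr p \<le> 1 + C0 * phi (snd (\<omega> t)) (fv \<omega> t (fst (\<omega> t)))"
      unfolding gr_def p_def by (rule selfb3[OF xy(2)])
    have q3: "(\<kappa>\<^sup>2) powr p * \<bar>gr \<omega> t\<bar> powr p \<le> (\<kappa>\<^sup>2) powr p * (1 + C0 * phi (snd (\<omega> t)) (fv \<omega> t (fst (\<omega> t))))"
      by (rule mult_left_mono[OF q2]) simp
    have q4: "eta t powr p * ((\<kappa>\<^sup>2) powr p * \<bar>gr \<omega> t\<bar> powr p) \<le> eta t powr p * ((\<kappa>\<^sup>2) powr p * (1 + C0 * phi (snd (\<omega> t)) (fv \<omega> t (fst (\<omega> t)))))"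
      by (rule mult_left_mono[OF q3]) simp
    show ?thesis using q1 q4 by simp
  qed
  have A3: "L * (\<bar>c\<bar> * \<kappa>\<^sup>2) powr p \<le> L * (eta t powr p * ((\<kappa>\<^sup>2) powr p * (1 + C0 * phi (snd (\<omega> t)) (fv \<omega> t (fst (\<omega> t))))))"
    by (rule mult_left_mono[OF A2]) (use L_pos in simp)
  show ?thesis using A0 A1 A3 unfolding c_def xt_def p_def by linarith
qed

end


lemma (in prob_space) abs_integral_le':
  fixes f :: "'a \<Rightarrow> real"
  assumes "0 \<le> C" "\<And>x. x \<in> space M \<Longrightarrow> \<bar>f x\<bar> \<le> C"
  shows "\<bar>\<integral>x. f x \<partial>M\<bar> \<le> C"
proof (cases "integrable M f")
  case True
  then have "f \<in> borel_measurable M" by auto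
  then show ?thesis using abs_integral_le assms by blast
next
  case False then show ?thesis using assms(1) by (simp add: not_integrable_integral_eq)
qed

context ogdl
begin

lemma Psib': "(\<And>k. k < t \<Longrightarrow> \<omega> k \<in> X \<times> Y) \<Longrightarrow> x' \<in> X \<Longrightarrow> \<bar>Psi \<omega> t x'\<bar> \<le> Gb t * \<kappa>\<^sup>2"
proof -
  assume g: "\<And>k. k < t \<Longrightarrow> \<omega> k \<in> X \<times> Y" and x: "x' \<in> X"
  interpret R: prob_space rho by (rule rho_prob)
  show ?thesis unfolding Psi_def
    by (rule R.abs_integral_le') (use Gb_nonneg dK_bound[OF g x] in auto)
qed

lemma Psi_upd: "Psi (fun_upd \<omega> t x) t = Psi \<omega> t"
  unfolding Psi_def using fv_upd[of t t \<omega> x] by simp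

lemma q_meas: "(\<lambda>\<omega>. gr \<omega> t * Psi \<omega> t (fst (\<omega> t))) \<in> borel_measurable (PM UNIV)"
proof -
  have "(\<lambda>\<omega>. (\<lambda>w. Psi (fst w) t (fst (snd w))) (\<omega>, \<omega> t)) \<in> borel_measurable (PM UNIV)"
    by (rule measurable_compose[OF measurable_Pair[OF measurable_ident_sets[OF refl] comp_x] PsiJ]) auto
  then show ?thesis using gr_meas[of t UNIV] by (intro borel_measurable_times) auto
qed

lemma q_int: "integrable (PM UNIV) (\<lambda>\<omega>. gr \<omega> t * Psi \<omega> t (fst (\<omega> t)))"
proof -
  interpret P: prob_space "PM UNIV" by (rule PMU_prob)
  show ?thesis
  proof (rule P.integrable_const_bound[where B="Gb t * (Gb t * \<kappa>\<^sup>2)"])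
    show "AE \<omega> in PM UNIV. norm (gr \<omega> t * Psi \<omega> t (fst (\<omega> t))) \<le> Gb t * (Gb t * \<kappa>\<^sup>2)"
    proof (rule AE_I2)
      fix \<omega> assume w: "\<omega> \<in> space (PM UNIV)"
      have g: "\<And>k. k < t \<Longrightarrow> \<omega> k \<in> X \<times> Y" using good_PM[OF w] by auto
      have xy: "\<omega> t \<in> X \<times> Y" using space_PM[OF w] by auto
      have "\<bar>gr \<omega> t\<bar> \<le> Gb t" unfolding gr_def using dphib[OF g xy] .
      moreover have "\<bar>Psi \<omega> t (fst (\<omega> t))\<bar> \<le> Gb t * \<kappa>\<^sup>2" using Psib'[OF g] xy by (auto simp: mem_Times_iff)
      ultimately show "norm (gr \<omega> t * Psi \<omega> t (fst (\<omega> t))) \<le> Gb t * (Gb t * \<kappa>\<^sup>2)"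
        by (simp add: abs_mult mult_mono')
    qed
  qed (rule q_meas)
qed

lemma Egpsi: "0 \<le> (\<integral>\<omega>. gr \<omega> t * Psi \<omega> t (fst (\<omega> t)) \<partial>PM UNIV)"
proof -
  let ?h = "\<lambda>w. dphi (snd (snd w)) (fv (fst w) t (fst (snd w))) * Psi (fst w) t (fst (snd w))"
  have mI: "?h \<in> borel_measurable (PM I \<Otimes>\<^sub>M rho)" if "{..<t} \<subseteq> I" for I
    using DJ[OF that] PsiJ[OF that] by (intro borel_measurable_times) auto
  have "(\<integral>\<omega>. ?h (\<omega>, \<omega> t) \<partial>PM UNIV) = (\<integral>\<omega>. (\<integral>z. ?h (\<omega>, z) \<partial>rho) \<partial>PM UNIV)"
  proof (rule T2[where C="Gb t * (Gb t * \<kappa>\<^sup>2)"])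
    show "?h \<in> borel_measurable (PM (UNIV - {t}) \<Otimes>\<^sub>M rho)" by (rule mI) auto
    show "?h \<in> borel_measurable (PM UNIV \<Otimes>\<^sub>M rho)" by (rule mI) auto
  next
    fix \<omega> :: "nat \<Rightarrow> 'x \<times> real" and z assume a: "\<And>k. k \<noteq> t \<Longrightarrow> \<omega> k \<in> space rho" "z \<in> space rho"
    have g: "\<And>k. k < t \<Longrightarrow> \<omega> k \<in> X \<times> Y" using a(1) space_rho by auto
    have z: "z \<in> X \<times> Y" using a(2) space_rho by simp
    have "\<bar>dphi (snd z) (fv \<omega> t (fst z))\<bar> \<le> Gb t" using dphib[OF g z] .
    moreover have "\<bar>Psi \<omega> t (fst z)\<bar> \<le> Gb t * \<kappa>\<^sup>2" using Psib'[OF g] z by (auto simp: mem_Times_iff)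
    ultimately show "\<bar>?h (\<omega>, z)\<bar> \<le> Gb t * (Gb t * \<kappa>\<^sup>2)" by (simp add: abs_mult mult_mono')
  next
    fix \<omega> :: "nat \<Rightarrow> 'x \<times> real" and x z
    show "?h (fun_upd \<omega> t x, z) = ?h (\<omega>, z)" using fv_upd[of t t \<omega> x] Psi_upd[of \<omega> t x] by simp
  qed
  moreover have "0 \<le> (\<integral>\<omega>. (\<integral>z. ?h (\<omega>, z) \<partial>rho) \<partial>PM UNIV)"
  proof (rule integral_nonneg_AE, rule AE_I2)
    fix \<omega> assume w: "\<omega> \<in> space (PM UNIV)"
    have g: "\<And>k. k < t \<Longrightarrow> \<omega> k \<in> X \<times> Y" using good_PM[OF w] by auto
    have "0 \<le> (\<integral>z'. dphi (snd z') (fv \<omega> t (fst z')) * (\<integral>z. dphi (snd z) (fv \<omega> t (fst z)) * K (fst z') (fst z) \<partial>rho) \<partial>rho)"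
    proof (rule Q_nonneg[where A="Gb t"])
      show "(\<lambda>z. dphi (snd z) (fv \<omega> t (fst z))) \<in> borel_measurable rho"
        using measurable_Pair2[OF DJ[of t UNIV] w] by simp
      fix z assume "z \<in> space rho"
      then show "\<bar>dphi (snd z) (fv \<omega> t (fst z))\<bar> \<le> Gb t" using dphib[OF g] space_rho by auto
    qed
    then show "0 \<le> (\<integral>z. ?h (\<omega>, z) \<partial>rho)" by (simp add: Psi_def)
  qed
  moreover have "(\<integral>\<omega>. ?h (\<omega>, \<omega> t) \<partial>PM UNIV) = (\<integral>\<omega>. gr \<omega> t * Psi \<omega> t (fst (\<omega> t)) \<partial>PM UNIV)"
    by (simp add: gr_def)
  ultimately show ?thesis by simp
qed

lemma L2:
  assumes t: "1 \<le> t"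
  shows "Aa (Suc t) \<le> Aa t + L * (eta t powr (1 + \<alpha>) * ((\<kappa>\<^sup>2) powr (1 + \<alpha>) * (1 + C0 * Aa t)))"
proof -
  interpret P: prob_space "PM UNIV" by (rule PMU_prob)
  let ?f1 = "\<lambda>\<omega>. phi (snd (\<omega> t)) (fv \<omega> t (fst (\<omega> t)))"
  let ?q = "\<lambda>\<omega>. gr \<omega> t * Psi \<omega> t (fst (\<omega> t))"
  let ?e = "eta t powr (1 + \<alpha>) * (\<kappa>\<^sup>2) powr (1 + \<alpha>)"
  have "Aa (Suc t) \<le> (\<integral>\<omega>. Rk \<omega> t - eta t * ?q \<omega> + L * ?e + (L * ?e * C0) * ?f1 \<omega> \<partial>PM UNIV)"
    unfolding Aa_def
  proof (rule integral_mono[OF Rk_int])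
    show "integrable (PM UNIV) (\<lambda>\<omega>. Rk \<omega> t - eta t * ?q \<omega> + L * ?e + (L * ?e * C0) * ?f1 \<omega>)"
      using Rk_int q_int f1_int by simp
    fix \<omega> assume w: "\<omega> \<in> space (PM UNIV)"
    show "Rk \<omega> (Suc t) \<le> Rk \<omega> t - eta t * ?q \<omega> + L * ?e + (L * ?e * C0) * ?f1 \<omega>"
      using L2_pt[OF w t] by (simp add: algebra_simps)
  qed
  also have "\<dots> = Aa t - eta t * (\<integral>\<omega>. ?q \<omega> \<partial>PM UNIV) + L * ?e + (L * ?e * C0) * Aa t"
    using Rk_int q_int f1_int EA[of t] by (simp add: Aa_def P.prob_space)
  also have "\<dots> \<le> Aa t + L * ?e + (L * ?e * C0) * Aa t"
    using Egpsi[of t] eta_pos[OF t] by simp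
  finally show ?thesis by (simp add: algebra_simps)
qed

end


context ogdl
begin

lemma Aa_ge: "Es \<le> Aa t"
proof -
  interpret P: prob_space "PM UNIV" by (rule PMU_prob)
  show ?thesis unfolding Aa_def by (rule P.integral_ge_const[OF Rk_int]) (use Es_le_Rk in auto)
qed

lemma Dd_ge: "0 \<le> Dd t"
  unfolding Dd_def by (rule integral_nonneg_AE) (use Nm_bound in auto)

lemma main_conv: "(\<lambda>t. \<integral>\<^sup>+ \<omega>. gen_err rho phi (eval_h Phi (ogd eta dphi Phi \<omega> t)) \<partial>PM UNIV)
         \<longlonglongrightarrow> gen_err rho phi (eval_h Phi fH)"
proof -
  define a where "a t = Aa t - Es" for t
  define Cc where "Cc = \<kappa>\<^sup>2 * (1 + C0 * Es + C0) + L * (\<kappa>\<^sup>2) powr (1 + \<alpha>) * (1 + C0 * Es + C0) + 1"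
  have E0: "0 \<le> Es" using Es_bounds by simp
  have k0: "0 \<le> \<kappa>\<^sup>2" by simp
  have kp: "0 \<le> (\<kappa>\<^sup>2) powr (1 + \<alpha>)" by simp
  have M0: "0 \<le> 1 + C0 * Es + C0" using C0_pos E0 by simp
  have Cc1: "\<kappa>\<^sup>2 * (1 + C0 * Es + C0) \<le> Cc" "L * (\<kappa>\<^sup>2) powr (1 + \<alpha>) * (1 + C0 * Es + C0) \<le> Cc"
    unfolding Cc_def using M0 k0 kp L_pos by (auto intro!: mult_nonneg_nonneg)
  have Cc0: "0 < Cc" unfolding Cc_def using M0 k0 kp L_pos by (simp add: add_nonneg_pos)
  have a0: "0 \<le> a t" for t unfolding a_def using Aa_ge[of t] by simp
  have key: "1 + C0 * Aa t \<le> (1 + C0 * Es + C0) * (1 + a t)" for t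
  proof -
    have "(1 + C0 * Es + C0) * (1 + a t) = 1 + C0 * Es + C0 + (1 + C0 * Es) * a t + C0 * a t"
      by (simp add: algebra_simps)
    moreover have "0 \<le> (1 + C0 * Es) * a t" using C0_pos E0 a0[of t] by simp
    moreover have "C0 * Aa t = C0 * Es + C0 * a t" unfolding a_def by (simp add: algebra_simps)
    ultimately show ?thesis using C0_pos by linarith
  qed
  have RL1: "Dd (Suc t) \<le> Dd t - 2 * eta t * a t + Cc * (eta t)\<^sup>2 * (1 + a t)" if t: "1 \<le> t" for t
  proof -
    have k1: "\<kappa>\<^sup>2 * (1 + C0 * Aa t) \<le> \<kappa>\<^sup>2 * ((1 + C0 * Es + C0) * (1 + a t))"
      by (rule mult_left_mono[OF key k0])
    have k2: "(eta t)\<^sup>2 * (\<kappa>\<^sup>2 * (1 + C0 * Aa t)) \<le> (eta t)\<^sup>2 * (\<kappa>\<^sup>2 * ((1 + C0 * Es + C0) * (1 + a t)))"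
      by (rule mult_left_mono[OF k1]) simp
    have "(eta t)\<^sup>2 * \<kappa>\<^sup>2 * (1 + C0 * Aa t) \<le> (eta t)\<^sup>2 * (\<kappa>\<^sup>2 * ((1 + C0 * Es + C0) * (1 + a t)))"
      using k2 by (simp only: mult.assoc)
    also have "\<dots> \<le> (eta t)\<^sup>2 * (Cc * (1 + a t))"
      using mult_right_mono[OF Cc1(1), of "1 + a t"] a0[of t]
      by (intro mult_left_mono) (auto simp: mult_ac)
    finally have "(eta t)\<^sup>2 * \<kappa>\<^sup>2 * (1 + C0 * Aa t) \<le> Cc * (eta t)\<^sup>2 * (1 + a t)" by (simp add: mult_ac)
    then show ?thesis using L1[OF t] unfolding a_def by linarith
  qed
  have RL2: "a (Suc t) \<le> a t + Cc * eta t powr (1 + \<alpha>) * (1 + a t)" if t: "1 \<le> t" for t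
  proof -
    have ep: "0 \<le> eta t powr (1 + \<alpha>)" by simp
    have "L * (eta t powr (1 + \<alpha>) * ((\<kappa>\<^sup>2) powr (1 + \<alpha>) * (1 + C0 * Aa t)))
        = eta t powr (1 + \<alpha>) * ((L * (\<kappa>\<^sup>2) powr (1 + \<alpha>)) * (1 + C0 * Aa t))" by (simp add: mult_ac)
    also have "\<dots> \<le> eta t powr (1 + \<alpha>) * ((L * (\<kappa>\<^sup>2) powr (1 + \<alpha>)) * ((1 + C0 * Es + C0) * (1 + a t)))"
      using L_pos kp by (intro mult_left_mono key) auto
    also have "\<dots> = eta t powr (1 + \<alpha>) * ((L * (\<kappa>\<^sup>2) powr (1 + \<alpha>) * (1 + C0 * Es + C0)) * (1 + a t))"
      by (simp add: mult_ac)
    also have "\<dots> \<le> eta t powr (1 + \<alpha>) * (Cc * (1 + a t))"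
      using mult_right_mono[OF Cc1(2), of "1 + a t"] a0[of t] ep by (intro mult_left_mono) auto
    finally have "L * (eta t powr (1 + \<alpha>) * ((\<kappa>\<^sup>2) powr (1 + \<alpha>) * (1 + C0 * Aa t))) \<le> Cc * eta t powr (1 + \<alpha>) * (1 + a t)"
      by (simp add: mult_ac)
    then show ?thesis using L2[OF t] unfolding a_def by linarith
  qed
  have "a \<longlonglongrightarrow> 0"
    by (rule RA[where D=Dd and \<eta>=eta and \<alpha>=\<alpha> and C=Cc])
       (use a0 Dd_ge eta_pos Cc0 alpha RL1 RL2 eta_div eta_lim in auto)
  then have "(\<lambda>t. a t + Es) \<longlonglongrightarrow> 0 + Es" by (intro tendsto_add) auto
  then have "Aa \<longlonglongrightarrow> Es" unfolding a_def by simp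
  then have lim: "(\<lambda>t. ennreal (Aa t)) \<longlonglongrightarrow> ennreal Es" by (rule tendsto_ennrealI)
  have eq: "(\<integral>\<^sup>+ \<omega>. gen_err rho phi (eval_h Phi (ogd eta dphi Phi \<omega> t)) \<partial>PM UNIV) = ennreal (Aa t)" for t
  proof -
    have "(\<integral>\<^sup>+ \<omega>. gen_err rho phi (eval_h Phi (ogd eta dphi Phi \<omega> t)) \<partial>PM UNIV) = (\<integral>\<^sup>+ \<omega>. ennreal (Rk \<omega> t) \<partial>PM UNIV)"
      by (rule nn_integral_cong) (simp add: gen_err_F[symmetric] F_def)
    also have "\<dots> = ennreal (Aa t)" unfolding Aa_def
      by (rule nn_integral_eq_integral[OF Rk_int]) (use Rkb[of _ UNIV t] in auto)
    finally show ?thesis .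
  qed
  show ?thesis unfolding eq gen_err_H by (rule lim)
qed

end


theorem theorem1:
  fixes X :: "'x::euclidean_space set" and Y :: "real set"
    and rho :: "('x \<times> real) measure"
    and K :: "'x \<Rightarrow> 'x \<Rightarrow> real" and Phi :: "'x \<Rightarrow> 'h::{real_inner, complete_space}"
    and phi dphi :: "real \<Rightarrow> real \<Rightarrow> real"
    and eta :: "nat \<Rightarrow> real" and \<alpha> L :: real and fH :: 'h
  assumes rho_prob: "prob_space rho"
    and rho_sets: "sets rho = sets (restrict_space borel (X \<times> Y))"
    and K_cont: "continuous_on (X \<times> X) (\<lambda>(x, x'). K x x')"
    and K_feature: "\<And>x x'. x \<in> X \<Longrightarrow> x' \<in> X \<Longrightarrow> K x x' = inner (Phi x) (Phi x')"
    and H_is_RKHS: "closure (span (Phi ` X)) = UNIV"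
    and kappa_fin: "\<exists>\<kappa>. \<forall>x\<in>X. sqrt (K x x) \<le> \<kappa>"
    and phi_nonneg: "\<And>y s. y \<in> Y \<Longrightarrow> 0 \<le> phi y s"
    and phi_meas: "(\<lambda>(y, s). phi y s) \<in> borel_measurable borel"
    and phi_deriv: "\<And>y s. y \<in> Y \<Longrightarrow> (phi y has_real_derivative dphi y s) (at s)"
    and phi_convex: "\<And>y. y \<in> Y \<Longrightarrow> convex_on UNIV (phi y)"
    and alpha: "0 < \<alpha>" "\<alpha> \<le> 1" and L_pos: "0 < L"
    and holder: "\<And>y s s'. y \<in> Y \<Longrightarrow> \<bar>dphi y s - dphi y s'\<bar> \<le> L * \<bar>s - s'\<bar> powr \<alpha>"
    and fH_min: "\<And>g. gen_err rho phi (eval_h Phi fH) \<le> gen_err rho phi (eval_h Phi g)"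
    and bounded: "\<exists>B. (\<forall>y\<in>Y. phi y 0 \<le> B) \<and> (\<forall>x\<in>X. \<forall>y\<in>Y. phi y (eval_h Phi fH x) \<le> B)"
    and eta_pos: "\<And>t. 1 \<le> t \<Longrightarrow> 0 < eta t"
    and eta_div: "filterlim (\<lambda>n. \<Sum>t=1..n. eta t) at_top sequentially"
    and eta_lim: "(\<lambda>t. eta t powr \<alpha> * (\<Sum>k=1..t. (eta k)\<^sup>2)) \<longlonglongrightarrow> 0"
  shows "(\<lambda>t. \<integral>\<^sup>+ \<omega>. gen_err rho phi (eval_h Phi (ogd eta dphi Phi \<omega> t))
              \<partial>(PiM UNIV (\<lambda>_::nat. rho)))
         \<longlonglongrightarrow> gen_err rho phi (eval_h Phi fH)"
proof -
  obtain \<kappa> where kap: "\<forall>x\<in>X. sqrt (K x x) \<le> \<kappa>" using kappa_fin by blast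
  obtain B where B: "\<forall>y\<in>Y. phi y 0 \<le> B" "\<forall>x\<in>X. \<forall>y\<in>Y. phi y (eval_h Phi fH x) \<le> B"
    using bounded by blast
  interpret ogdl X Y rho K Phi phi dphi eta \<alpha> L fH B \<kappa>
    apply (rule ogdl.intro)
                      apply (rule rho_prob)
                     apply (rule rho_sets)
                    apply (rule K_cont)
                   apply (rule K_feature, assumption, assumption)
                  apply (simp add: kap)
                 apply (erule phi_nonneg)
                apply (rule phi_meas)
               apply (erule phi_deriv)
              apply (erule phi_convex)
             apply (rule alpha(1))
            apply (rule alpha(2))
           apply (rule L_pos)
          apply (erule holder)
         apply (rule fH_min)
        apply (simp add: B)
       apply (simp add: B)
      apply (erule eta_pos)
     apply (rule eta_div)
    apply (rule eta_lim)
    done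
  show ?thesis by (rule main_conv)
qed

end
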